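(* In the setting described in the context, with all standing assumptions in force, for every $i\in\{1,\dots,N\}$: $$\lim_{t\to\infty}\Big\|\mathbf y_{(i,:)}^t-\frac1N\sum_{j=1}^N\nabla f_j(\mathbf x_{(j,:)}^t)\Big\|=0\qquad\text{and}\qquad \sum_{t=0}^\infty\gamma^t\Big\|\mathbf y_{(i,:)}^t-\frac1N\sum_{j=1}^N\nabla f_j(\mathbf x_{(j,:)}^t)\Big\|<\infty .$$
   Context: Problem. Let $N,B,d\ge1$. A vector $\mathbf x\in\mathbb R^{dB}$ is partitioned into blocks $\mathbf x=(\mathbf x_1,\dots,\mathbf x_B)$ with $\mathbf x_\ell\in\mathbb R^d$, and $\nabla_\ell$ denotes the partial gradient with respect to block $\ell$. Problem (P) is $$\min_{\mathbf x}\ U(\mathbf x)=\sum_{i=1}^Nf_i(\mathbf x)+\sum_{\ell=1}^B r_\ell(\mathbf x_\ell)\quad\text{s.t. }\mathbf x_\ell\in\mathcal K_\ell,\ \ell=1,\dots,B,$$ with $\mathcal K=\mathcal K_1\times\dots\times\mathcal K_B$. Problem assumptions: - each $\mathcal K_\ell\subseteq\mathbb R^d$ is nonempty, closed and convex; - each $f_i:\mathbb R^{dB}\to\mathbb R$ is $C^1$ on an open set containing $\mathcal K$, and $\nabla f_i$ is $L_i$-Lipschitz continuous and bounded on $\mathcal K$; - each $r_\ell:\mathbb R^d\to\mathbb R$ is convex with bounded subgradients on $\mathcal K_\ell$; - $U$ is coercive on $\mathcal K$. Network. $\mathcal G=(\{1,\dots,N\},\mathcal E)$ is a fixed, strongly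 connected digraph containing all self-loops. The in-neighbor set of $i$ is $\mathcal N_i=\{j:(j,i)\in\mathcal E\}$. Block selection. At each iteration $t\ge0$, agent $i$ picks $\ell_i^t\in\{1,\dots,B\}$. For each $i$ there is a finite $T_i>0$ with $\bigcup_{\tau=0}^{T_i-1}\{\ell_i^{t+\tau}\}=\{1,\dots,B\}$ for all $t\ge0$. Define $\mathcal N_{i,\ell}^t=\{j\in\mathcal N_i:\ell_j^t=\ell\}\cup\{i\}$ and $\mathcal E_\ell^t=\{(j,i)\in\mathcal E:j\in\mathcal N_{i,\ell}^t\}$. Weights. For each $\ell$ and $t$, $A_\ell^t=[a_{ij\ell}^t]$ satisfies $a_{ij\ell}^t>\kappa$ if $(j,i)\in\mathcal E_\ell^t$, $a_{ij\ell}^t=0$ otherwise (for a fixed $\kappa>0$), and $\mathbf 1^\top A_\ell^t=\mathbf 1^\top$. Surrogates. For each $i,\ell$, $\tilde f_{i,\ell}:\mathcal K_\ell\times\mathcal K\to\mathbb R$ satisfies: - $\tilde f_{i,\ell}(\cdot;\mathbf x)$ is $C^1$ and $\tau_i$-strongly convex on $\mathcal K_\ell$ uniformly in $\mathbf x\in\mathcal K$, with $\tau_i>0$; - $\nabla\tilde f_{i,\ell}(\mathbf x_\ell;\mathbf x)=\nabla_\ell f_i(\mathbf x)$ for all $\mathbf x\in\mathcal K$, where $\nabla\tilde f_{i,\ell}$ is the gradient in the first argument and $\mathbf x_\ell$ is the $\ell$-th block of $\mathbf x$; - $\nabla\tilde f_{i,\ell}(\mathbf z;\cdot)$ is Lipschitz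 continuous on $\mathcal K$ uniformly in $\mathbf z\in\mathcal K_\ell$. For $\mathbf w\in\mathcal K$ and $\mathbf g\in\mathbb R^d$ let $$\hat f_{i,\ell}(\mathbf z;\mathbf w,\mathbf g)=\tilde f_{i,\ell}(\mathbf z;\mathbf w)+(N\mathbf g-\nabla_\ell f_i(\mathbf w))^\top(\mathbf z-\mathbf w_\ell).$$ Step sizes. $0<\gamma^t\le1$, $\gamma^{t+1}\le\gamma^t$, $\sum_t\gamma^t=\infty$, $\sum_t(\gamma^t)^2<\infty$. Algorithm. Agent $i$ holds $\mathbf x_{(i,:)}^t=(\mathbf x_{(i,\ell)}^t)_\ell$, $\mathbf y_{(i,:)}^t=(\mathbf y_{(i,\ell)}^t)_\ell$ in $\mathbb R^{dB}$ and scalars $\phi_{(i,\ell)}^t$. Initialization: $\mathbf x_{(i,:)}^0\in\mathcal K$ arbitrary, $\mathbf y_{(i,:)}^0=\nabla f_i(\mathbf x_{(i,:)}^0)$, $\phi_{(i,\ell)}^0=1$. At iteration $t$, each agent $i$: - computes $\tilde{\mathbf x}_{(i,\ell_i^t)}^t=\arg\min_{\mathbf z\in\mathcal K_{\ell_i^t}}\hat f_{i,\ell_i^t}(\mathbf z;\mathbf x_{(i,:)}^t,\mathbf y_{(i,\ell_i^t)}^t)+r_{\ell_i^t}(\mathbf z)$; - sets $\Delta\mathbf x_{(i,\ell)}^t=\tilde{\mathbf x}_{(i,\ell)}^t-\mathbf x_{(i,\ell)}^t$ if $\ell=\ell_i^t$ and $\Delta\mathbf x_{(i,\ell)}^t=\mathbf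 0$ otherwise; - for every $\ell$ updates $$\phi_{(i,\ell)}^{t+1}=\sum_{j\in\mathcal N_{i,\ell}^t}a_{ij\ell}^t\phi_{(j,\ell)}^t,\qquad \mathbf x_{(i,\ell)}^{t+1}=\sum_{j\in\mathcal N_{i,\ell}^t}\frac{a_{ij\ell}^t\phi_{(j,\ell)}^t}{\phi_{(i,\ell)}^{t+1}}\big(\mathbf x_{(j,\ell)}^t+\gamma^t\Delta\mathbf x_{(j,\ell)}^t\big),$$ $$\mathbf y_{(i,\ell)}^{t+1}=\sum_{j\in\mathcal N_{i,\ell}^t}\frac{a_{ij\ell}^t}{\phi_{(i,\ell)}^{t+1}}\Big(\phi_{(j,\ell)}^t\mathbf y_{(j,\ell)}^t+\nabla_\ell f_j(\mathbf x_{(j,:)}^{t+1})-\nabla_\ell f_j(\mathbf x_{(j,:)}^t)\Big).$$ *)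

theory Defs
  imports "HOL-Analysis.Analysis"
begin

text \<open>Agents are the elements of a finite type 'n (so N = CARD('n)), blocks are the
elements of a finite type 'b (so B = CARD('b)), and each block lives in real^'d
(so d = CARD('d)).  A full vector in R^(dB) is an element of real^'d^'b, whose
component x $ l is the l-th block.\<close>

definition strongly_convex_on :: "'a::real_normed_vector set \<Rightarrow> ('a \<Rightarrow> real) \<Rightarrow> real \<Rightarrow> bool" where
  "strongly_convex_on S f \<tau> \<longleftrightarrow> convex_on S (\<lambda>z. f z - \<tau> / 2 * (norm z)\<^sup>2)"

definition is_subgradient :: "('a::real_inner \<Rightarrow> real) \<Rightarrow> 'a \<Rightarrow> 'a \<Rightarrow> bool" where
  "is_subgradient r x g \<longleftrightarrow> (\<forall>z. r z \<ge> r x + g \<bullet> (z - x))"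

definition coercive_on :: "'a::real_normed_vector set \<Rightarrow> ('a \<Rightarrow> real) \<Rightarrow> bool" where
  "coercive_on S U \<longleftrightarrow> (\<forall>M. \<exists>R. \<forall>x\<in>S. norm x \<ge> R \<longrightarrow> U x \<ge> M)"

definition prodset :: "('b \<Rightarrow> (real^'d) set) \<Rightarrow> (real^'d^'b) set" where
  "prodset Kb = {x. \<forall>l. x $ l \<in> Kb l}"

definition nbrs :: "('n \<times> 'n) set \<Rightarrow> (nat \<Rightarrow> 'n \<Rightarrow> 'b) \<Rightarrow> nat \<Rightarrow> 'n \<Rightarrow> 'b \<Rightarrow> 'n set" where
  "nbrs E sel t i l = {j. (j, i) \<in> E \<and> sel t j = l} \<union> {i}"

definition edges_blk :: "('n \<times> 'n) set \<Rightarrow> (nat \<Rightarrow> 'n \<Rightarrow> 'b) \<Rightarrow> nat \<Rightarrow> 'b \<Rightarrow> ('n \<times> 'n) set" where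
  "edges_blk E sel t l = {(j, i). (j, i) \<in> E \<and> j \<in> nbrs E sel t i l}"

end

theory Submission
  imports Defs
begin


lemma comb_bounds:
  fixes R Q :: "'n::finite \<Rightarrow> real"
  assumes Qn: "\<And>m. 0 \<le> Q m" and Qs: "(\<Sum>m\<in>UNIV. Q m) = 1"
  shows "Min (range R) \<le> (\<Sum>m\<in>UNIV. R m * Q m)" "(\<Sum>m\<in>UNIV. R m * Q m) \<le> Max (range R)"
proof -
  have "(\<Sum>m\<in>UNIV. Min (range R) * Q m) \<le> (\<Sum>m\<in>UNIV. R m * Q m)"
    by (rule sum_mono) (simp add: Qn mult_right_mono)
  then show "Min (range R) \<le> (\<Sum>m\<in>UNIV. R m * Q m)"
    by (simp add: sum_distrib_left[symmetric] Qs)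
  have "(\<Sum>m\<in>UNIV. R m * Q m) \<le> (\<Sum>m\<in>UNIV. Max (range R) * Q m)"
    by (rule sum_mono) (simp add: Qn mult_right_mono)
  then show "(\<Sum>m\<in>UNIV. R m * Q m) \<le> Max (range R)"
    by (simp add: sum_distrib_left[symmetric] Qs)
qed

lemma comb_contract:
  fixes R Q Q' :: "'n::finite \<Rightarrow> real"
  assumes Qn: "\<And>m. \<eta> \<le> Q m" and Qs: "(\<Sum>m\<in>UNIV. Q m) = 1"
    and Qn': "\<And>m. \<eta> \<le> Q' m" and Qs': "(\<Sum>m\<in>UNIV. Q' m) = 1"
  shows "(\<Sum>m\<in>UNIV. R m * Q m) - (\<Sum>m\<in>UNIV. R m * Q' m)
     \<le> (1 - real CARD('n) * \<eta>) * (Max (range R) - Min (range R))"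
proof -
  have a: "(\<Sum>m\<in>UNIV. R m * (Q m - \<eta>)) \<le> (\<Sum>m\<in>UNIV. Max (range R) * (Q m - \<eta>))"
    by (rule sum_mono) (simp add: Qn mult_right_mono)
  have b: "(\<Sum>m\<in>UNIV. Min (range R) * (Q' m - \<eta>)) \<le> (\<Sum>m\<in>UNIV. R m * (Q' m - \<eta>))"
    by (rule sum_mono) (simp add: Qn' mult_right_mono)
  have s1: "(\<Sum>m\<in>UNIV. (Q m - \<eta>)) = 1 - real CARD('n) * \<eta>"
    using Qs by (simp add: sum_subtractf)
  have s2: "(\<Sum>m\<in>UNIV. (Q' m - \<eta>)) = 1 - real CARD('n) * \<eta>"
    using Qs' by (simp add: sum_subtractf)
  have e1: "(\<Sum>m\<in>UNIV. R m * Q m) = (\<Sum>m\<in>UNIV. R m * (Q m - \<eta>)) + \<eta> * (\<Sum>m\<in>UNIV. R m)"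
    by (simp add: algebra_simps sum.distrib sum_subtractf sum_distrib_left)
  have e2: "(\<Sum>m\<in>UNIV. R m * Q' m) = (\<Sum>m\<in>UNIV. R m * (Q' m - \<eta>)) + \<eta> * (\<Sum>m\<in>UNIV. R m)"
    by (simp add: algebra_simps sum.distrib sum_subtractf sum_distrib_left)
  have a': "(\<Sum>m\<in>UNIV. R m * (Q m - \<eta>)) \<le> Max (range R) * (1 - real CARD('n) * \<eta>)"
    using a by (simp add: sum_distrib_left[symmetric] s1)
  have b': "Min (range R) * (1 - real CARD('n) * \<eta>) \<le> (\<Sum>m\<in>UNIV. R m * (Q' m - \<eta>))"
    using b by (simp add: sum_distrib_left[symmetric] s2)
  show ?thesis unfolding e1 e2 using a' b' by (simp add: algebra_simps)
qed

locale pushsum =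
  fixes M :: "nat \<Rightarrow> 'n::finite \<Rightarrow> 'n \<Rightarrow> real"
  assumes M_nonneg: "\<And>t i j. 0 \<le> M t i j"
    and M_col: "\<And>t j. (\<Sum>i\<in>UNIV. M t i j) = 1"
begin

fun Phi :: "nat \<Rightarrow> nat \<Rightarrow> 'n \<Rightarrow> 'n \<Rightarrow> real" where
  "Phi s 0 = (\<lambda>i j. if i = j then 1 else 0)"
| "Phi s (Suc k) = (\<lambda>i j. \<Sum>m\<in>UNIV. M (s+k) i m * Phi s k m j)"

lemma Phi_nonneg: "0 \<le> Phi s k i j"
  by (induction k arbitrary: i j) (auto intro!: sum_nonneg mult_nonneg_nonneg M_nonneg)

lemma Phi_col: "(\<Sum>i\<in>UNIV. Phi s k i j) = 1"
proof (induction k arbitrary: j)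
  case 0
  then show ?case by simp
next
  case (Suc k)
  have "(\<Sum>i\<in>UNIV. Phi s (Suc k) i j) = (\<Sum>i\<in>UNIV. \<Sum>m\<in>UNIV. M (s+k) i m * Phi s k m j)"
    by simp
  also have "\<dots> = (\<Sum>m\<in>UNIV. \<Sum>i\<in>UNIV. M (s+k) i m * Phi s k m j)"
    by (rule sum.swap)
  also have "\<dots> = (\<Sum>m\<in>UNIV. (\<Sum>i\<in>UNIV. M (s+k) i m) * Phi s k m j)"
    by (simp add: sum_distrib_right)
  also have "\<dots> = 1" using Suc by (simp add: M_col)
  finally show ?case .
qed

lemma Phi_le1: "Phi s k i j \<le> 1"
proof -
  have "Phi s k i j \<le> (\<Sum>i\<in>UNIV. Phi s k i j)"
    by (rule member_le_sum) (auto simp: Phi_nonneg)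
  then show ?thesis by (simp add: Phi_col)
qed

lemma Phi_split: "Phi s (a + b) i j = (\<Sum>m\<in>UNIV. Phi (s+a) b i m * Phi s a m j)"
proof (induction b arbitrary: i j)
  case 0
  have "(\<Sum>m\<in>UNIV. Phi (s+a) 0 i m * Phi s a m j) = (\<Sum>m\<in>UNIV. if i = m then Phi s a m j else 0)"
    by (rule sum.cong) auto
  then show ?case by simp
next
  case (Suc b)
  have "Phi s (a + Suc b) i j = (\<Sum>m'\<in>UNIV. M (s+a+b) i m' * Phi s (a+b) m' j)"
    by (simp add: add.assoc)
  also have "\<dots> = (\<Sum>m'\<in>UNIV. M (s+a+b) i m' * (\<Sum>m\<in>UNIV. Phi (s+a) b m' m * Phi s a m j))"
    using Suc by simp
  also have "\<dots> = (\<Sum>m'\<in>UNIV. \<Sum>m\<in>UNIV. M (s+a+b) i m' * Phi (s+a) b m' m * Phi s a m j)"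
    by (simp add: sum_distrib_left mult.assoc)
  also have "\<dots> = (\<Sum>m\<in>UNIV. \<Sum>m'\<in>UNIV. M (s+a+b) i m' * Phi (s+a) b m' m * Phi s a m j)"
    by (rule sum.swap)
  also have "\<dots> = (\<Sum>m\<in>UNIV. (\<Sum>m'\<in>UNIV. M (s+a+b) i m' * Phi (s+a) b m' m) * Phi s a m j)"
    by (simp add: sum_distrib_right)
  also have "\<dots> = (\<Sum>m\<in>UNIV. Phi (s+a) (Suc b) i m * Phi s a m j)"
    by simp
  finally show ?case .
qed

lemma Phi_diag: assumes "\<And>t i. \<kappa>0 \<le> M t i i" "0 \<le> \<kappa>0"
  shows "\<kappa>0 ^ k \<le> Phi s k i i"
proof (induction k)
  case 0
  then show ?case by simp
next
  case (Suc k)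
  have "M (s+k) i i * Phi s k i i \<le> (\<Sum>m\<in>UNIV. M (s+k) i m * Phi s k m i)"
    by (rule member_le_sum[where f="\<lambda>m. M (s+k) i m * Phi s k m i"])
       (auto intro: mult_nonneg_nonneg M_nonneg Phi_nonneg)
  moreover have "\<kappa>0 * \<kappa>0 ^ k \<le> M (s+k) i i * Phi s k i i"
    using Suc assms by (intro mult_mono) (auto simp: M_nonneg)
  ultimately show ?case by simp
qed

definition osc :: "nat \<Rightarrow> nat \<Rightarrow> 'n \<Rightarrow> real" where
  "osc s k i = Max (range (Phi s k i)) - Min (range (Phi s k i))"

lemma osc_le1: "osc s k i \<le> 1"
proof -
  have 1: "Max (range (Phi s k i)) \<le> 1" by (auto simp: Phi_le1)
  have 2: "0 \<le> Min (range (Phi s k i))" by (auto simp: Phi_nonneg)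
  show ?thesis unfolding osc_def using 1 2 by linarith
qed

lemma in_range_Phi: "Min (range (Phi (s+a) b i)) \<le> Phi s (a+b) i j"
    "Phi s (a+b) i j \<le> Max (range (Phi (s+a) b i))"
  unfolding Phi_split
  by (rule comb_bounds[OF Phi_nonneg Phi_col])+

lemma Phi_range_self: "Min (range (Phi s k i)) \<le> Phi s k i j" "Phi s k i j \<le> Max (range (Phi s k i))"
  by auto


lemma Phi_split_ge: "Phi (s+a) b i m * Phi s a m j \<le> Phi s (a + b) i j"
  unfolding Phi_split
  by (rule member_le_sum[where f="\<lambda>m. Phi (s+a) b i m * Phi s a m j"])
     (auto intro: mult_nonneg_nonneg Phi_nonneg)

end

locale pushsum_graph = pushsum M for M :: "nat \<Rightarrow> 'n::finite \<Rightarrow> 'n \<Rightarrow> real" +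
  fixes E :: "('n \<times> 'n) set" and \<kappa>0 :: real and T :: nat
  assumes k0_pos: "0 < \<kappa>0" and k0_le: "\<kappa>0 \<le> 1"
    and diag: "\<And>t i. \<kappa>0 \<le> M t i i"
    and T_pos: "0 < T"
    and edge: "\<And>i j s. (j, i) \<in> E \<Longrightarrow> \<exists>\<tau>. s \<le> \<tau> \<and> \<tau> < s + T \<and> \<kappa>0 \<le> M \<tau> i j"
    and sc: "\<And>i j. (j, i) \<in> E\<^sup>*"
begin

lemma Phi_diag': "\<kappa>0 ^ k \<le> Phi s k i i"
  by (rule Phi_diag) (use diag k0_pos in auto)

lemma edge_Phi: assumes "(j, i) \<in> E" shows "\<kappa>0 ^ T \<le> Phi s T i j"
proof -
  obtain \<tau> where \<tau>: "s \<le> \<tau>" "\<tau> < s + T" "\<kappa>0 \<le> M \<tau> i j" using edge[OF assms] by blast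
  define d where "d = \<tau> - s"
  define e where "e = T - Suc d"
  have T_eq: "T = Suc d + e" using \<tau> by (simp add: d_def e_def)
  have 1: "\<kappa>0 * \<kappa>0 ^ d \<le> Phi s (Suc d) i j"
  proof -
    have "M (s+d) i j * Phi s d j j \<le> Phi s (Suc d) i j"
      by simp (rule member_le_sum[where f="\<lambda>m. M (s+d) i m * Phi s d m j"],
         auto intro: mult_nonneg_nonneg Phi_nonneg M_nonneg)
    moreover have "\<kappa>0 * \<kappa>0 ^ d \<le> M (s+d) i j * Phi s d j j"
      using \<tau> Phi_diag'[of d s j] k0_pos by (intro mult_mono) (auto simp: d_def)
    ultimately show ?thesis by linarith
  qed
  have "Phi (s + Suc d) e i i * Phi s (Suc d) i j \<le> Phi s (Suc d + e) i j"
    by (rule Phi_split_ge)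
  moreover have "\<kappa>0 ^ e * (\<kappa>0 * \<kappa>0 ^ d) \<le> Phi (s + Suc d) e i i * Phi s (Suc d) i j"
    using 1 Phi_diag'[of e "s + Suc d" i] k0_pos by (intro mult_mono) (auto intro: Phi_nonneg)
  ultimately have "\<kappa>0 ^ e * (\<kappa>0 * \<kappa>0 ^ d) \<le> Phi s T i j" using T_eq by simp
  moreover have "\<kappa>0 ^ e * (\<kappa>0 * \<kappa>0 ^ d) = \<kappa>0 ^ T"
    using T_eq by (simp add: power_add)
  ultimately show ?thesis by simp
qed

lemma path_Phi: "(j, i) \<in> E ^^ n \<Longrightarrow> \<kappa>0 ^ (n * T + k) \<le> Phi s (n * T + k) i j"
proof (induction n arbitrary: i k)
  case 0
  then show ?case using Phi_diag' by simp
next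
  case (Suc n)
  from Suc.prems obtain a where a: "(j, a) \<in> E ^^ n" "(a, i) \<in> E" by (auto elim: relpow_Suc_E)
  have ih: "\<kappa>0 ^ (n * T + 0) \<le> Phi s (n * T + 0) a j" using Suc.IH[OF a(1)] .
  have e1: "\<kappa>0 ^ k * \<kappa>0 ^ T \<le> Phi (s + n*T) (T + k) i a"
  proof -
    have "Phi (s + n*T + T) k i i * Phi (s + n*T) T i a \<le> Phi (s + n*T) (T + k) i a"
      by (rule Phi_split_ge)
    moreover have "\<kappa>0 ^ k * \<kappa>0 ^ T \<le> Phi (s + n*T + T) k i i * Phi (s + n*T) T i a"
      using Phi_diag'[of k _ i] edge_Phi[OF a(2)] k0_pos by (intro mult_mono) (auto intro: Phi_nonneg)
    ultimately show ?thesis by linarith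
  qed
  have "Phi (s + n*T) (T + k) i a * Phi s (n*T) a j \<le> Phi s (n*T + (T + k)) i j"
    by (rule Phi_split_ge)
  moreover have "\<kappa>0 ^ k * \<kappa>0 ^ T * \<kappa>0 ^ (n*T) \<le> Phi (s + n*T) (T + k) i a * Phi s (n*T) a j"
    using e1 ih k0_pos by (intro mult_mono) (auto intro: Phi_nonneg)
  moreover have "\<kappa>0 ^ k * \<kappa>0 ^ T * \<kappa>0 ^ (n*T) = \<kappa>0 ^ (Suc n * T + k)"
    by (simp add: power_add algebra_simps)
  moreover have "n*T + (T + k) = Suc n * T + k" by simp
  ultimately show ?case by (smt (verit))
qed

definition nn :: "'n \<Rightarrow> 'n \<Rightarrow> nat" where "nn i j = (SOME n. (j, i) \<in> E ^^ n)"
definition W :: nat where "W = Suc (Max (range (\<lambda>p. nn (fst p) (snd p)))) * T"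
definition \<eta> :: real where "\<eta> = \<kappa>0 ^ W"

lemma W_pos: "0 < W" using T_pos by (simp add: W_def)

lemma eta_pos: "0 < \<eta>" using k0_pos by (simp add: \<eta>_def)

lemma window: "\<eta> \<le> Phi s W i j"
proof -
  have p: "(j, i) \<in> E ^^ nn i j" unfolding nn_def
    using sc[of j i] by (metis (mono_tags) rtrancl_power someI_ex)
  have "nn i j \<le> Max (range (\<lambda>p. nn (fst p) (snd p)))"
    by (rule Max_ge) (auto intro: image_eqI[where x="(i,j)"])
  then have "nn i j * T \<le> W"
    unfolding W_def by (intro mult_le_mono1) simp
  then obtain k where "W = nn i j * T + k"
    using le_Suc_ex by blast
  then show ?thesis using path_Phi[OF p, of k s] by (simp add: \<eta>_def)
qed

lemma N_eta: "real CARD('n) * \<eta> \<le> 1"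
proof -
  have "(\<Sum>i\<in>(UNIV::'n set). \<eta>) \<le> (\<Sum>i\<in>UNIV. Phi 0 W i (undefined::'n))"
    by (rule sum_mono) (rule window)
  then show ?thesis by (simp add: Phi_col)
qed

definition q :: real where "q = 1 - real CARD('n) * \<eta>"

lemma q_nonneg: "0 \<le> q" using N_eta by (simp add: q_def)
lemma q_lt1: "q < 1" using eta_pos by (simp add: q_def)

lemma osc_step: "osc s (W + a) i \<le> q * osc (s + W) a i"
proof -
  let ?X = "Phi s (W + a) i"
  have "Max (range ?X) \<in> range ?X" by (rule Max_in) auto
  then obtain j1 where j1: "Max (range ?X) = ?X j1" by blast
  have "Min (range ?X) \<in> range ?X" by (rule Min_in) auto
  then obtain j2 where j2: "Min (range ?X) = ?X j2" by blast
  have "?X j1 - ?X j2 \<le> q * (Max (range (Phi (s+W) a i)) - Min (range (Phi (s+W) a i)))"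
    unfolding Phi_split q_def
    by (rule comb_contract) (auto intro: window simp: Phi_col)
  then show ?thesis by (simp add: osc_def j1 j2)
qed

lemma osc_pow: "osc s (m * W + a) i \<le> q ^ m"
proof (induction m arbitrary: s)
  case 0
  then show ?case using osc_le1 by simp
next
  case (Suc m)
  have "osc s (Suc m * W + a) i = osc s (W + (m * W + a)) i" by (simp add: add.assoc)
  also have "\<dots> \<le> q * osc (s + W) (m * W + a) i" by (rule osc_step)
  also have "\<dots> \<le> q * q ^ m" using Suc.IH q_nonneg by (intro mult_left_mono) auto
  finally show ?case by simp
qed

lemma Phi_close: assumes "k \<le> t"
  shows "\<bar>Phi k (t - k) i j - Phi 0 t i j'\<bar> \<le> q ^ ((t - k) div W)"
proof -
  have t: "t = k + (t - k)" using assms by simp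
  have a: "Min (range (Phi k (t-k) i)) \<le> Phi 0 t i j'" "Phi 0 t i j' \<le> Max (range (Phi k (t-k) i))"
    using in_range_Phi[of 0 k "t-k" i j'] t by simp_all
  have b: "Min (range (Phi k (t-k) i)) \<le> Phi k (t-k) i j" "Phi k (t-k) i j \<le> Max (range (Phi k (t-k) i))"
    by (rule Phi_range_self)+
  have "osc k (t-k) i \<le> q ^ ((t - k) div W)"
    using osc_pow[of k "(t-k) div W" "(t-k) mod W" i] by (simp add: mult.commute)
  then show ?thesis using a b unfolding osc_def by linarith
qed

lemma geom: "\<exists>C \<rho>. 0 < C \<and> 0 < \<rho> \<and> \<rho> < 1 \<and> (\<forall>n. q ^ (n div W) \<le> C * \<rho> ^ n)"
proof -
  define q' where "q' = max q (1/2)"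
  have q'1: "0 < q'" "q' < 1" "q \<le> q'" using q_lt1 by (auto simp: q'_def)
  define \<rho> where "\<rho> = root W q'"
  have \<rho>: "0 < \<rho>" "\<rho> < 1" "\<rho> ^ W = q'" using q'1 W_pos
    by (auto simp: \<rho>_def real_root_lt_1_iff real_root_pow_pos2)
  have "q ^ (n div W) \<le> (1/q') * \<rho> ^ n" for n
  proof -
    have "q ^ (n div W) \<le> q' ^ (n div W)" using q_nonneg q'1 by (intro power_mono) auto
    also have "\<dots> = \<rho> ^ (W * (n div W))" by (simp add: power_mult \<rho>)
    also have "\<dots> = \<rho> ^ (W * (n div W) + W) / q'" using \<rho> q'1 by (simp add: power_add)
    also have "\<rho> ^ (W * (n div W) + W) \<le> \<rho> ^ n"
    proof (rule power_decreasing)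
      show "n \<le> W * (n div W) + W"
      proof -
        have "n = W * (n div W) + n mod W" by simp
        moreover have "n mod W < W" using W_pos by simp
        ultimately show ?thesis by linarith
      qed
    qed (use \<rho> in auto)
    hence "\<rho> ^ (W * (n div W) + W) / q' \<le> \<rho> ^ n / q'" using q'1 by (simp add: divide_right_mono)
    finally show ?thesis by simp
  qed
  then show ?thesis using \<rho> q'1 by (intro exI[of _ "1/q'"] exI[of _ \<rho>]) auto
qed

lemma p_lower: "min \<eta> (\<kappa>0 ^ W) \<le> (\<Sum>j\<in>UNIV. Phi 0 t i j)"
proof (cases "W \<le> t")
  case True
  have "(\<Sum>j\<in>UNIV. \<Sum>m\<in>UNIV. \<eta> * Phi 0 (t-W) m j) \<le> (\<Sum>j\<in>UNIV. \<Sum>m\<in>UNIV. Phi (t-W) W i m * Phi 0 (t-W) m j)"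
    by (intro sum_mono mult_right_mono) (auto intro: window Phi_nonneg)
  also have "\<dots> = (\<Sum>j\<in>UNIV. Phi 0 t i j)"
    using True Phi_split[of 0 "t - W" W i] by simp
  finally have "\<eta> * real CARD('n) \<le> (\<Sum>j\<in>UNIV. Phi 0 t i j)"
    by (simp add: sum_distrib_left[symmetric] Phi_col mult.commute)
  moreover have "\<eta> \<le> \<eta> * real CARD('n)" using eta_pos
    by (simp add: Suc_le_eq)
  ultimately show ?thesis by linarith
next
  case False
  have "\<kappa>0 ^ W \<le> \<kappa>0 ^ t" using False k0_pos k0_le by (intro power_decreasing) auto
  also have "\<dots> \<le> Phi 0 t i i" by (rule Phi_diag')
  also have "\<dots> \<le> (\<Sum>j\<in>UNIV. Phi 0 t i j)" by (rule member_le_sum) (auto intro: Phi_nonneg)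
  finally show ?thesis by linarith
qed

end




lemma sum_scale_swap:
  fixes v :: "'m \<Rightarrow> 'v::real_vector"
  assumes "finite J" "finite K"
  shows "(\<Sum>j\<in>J. a j *\<^sub>R (\<Sum>m\<in>K. b j m *\<^sub>R v m)) = (\<Sum>m\<in>K. (\<Sum>j\<in>J. a j * b j m) *\<^sub>R v m)"
proof -
  have "(\<Sum>j\<in>J. a j *\<^sub>R (\<Sum>m\<in>K. b j m *\<^sub>R v m)) = (\<Sum>j\<in>J. \<Sum>m\<in>K. (a j * b j m) *\<^sub>R v m)"
    by (simp add: scaleR_sum_right)
  also have "\<dots> = (\<Sum>m\<in>K. \<Sum>j\<in>J. (a j * b j m) *\<^sub>R v m)" by (rule sum.swap)
  also have "\<dots> = (\<Sum>m\<in>K. (\<Sum>j\<in>J. a j * b j m) *\<^sub>R v m)" by (simp add: scaleR_sum_left)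
  finally show ?thesis .
qed

context pushsum begin

lemma Phi_Suc_left: assumes "k \<le> t"
  shows "Phi k (Suc t - k) i m = (\<Sum>j\<in>UNIV. M t i j * Phi k (t - k) j m)"
proof -
  have "Suc t - k = Suc (t - k)" using assms by simp
  moreover have "k + (t - k) = t" using assms by simp
  ultimately show ?thesis by simp
qed

lemma Phi_one: "Phi t (Suc t - t) i m = M t i m"
proof -
  have "Phi t (Suc t - t) i m = (\<Sum>j\<in>UNIV. M t i j * (if j = m then 1 else 0))" by simp
  also have "\<dots> = (\<Sum>j\<in>UNIV. if j = m then M t i j else 0)" by (rule sum.cong) auto
  finally show ?thesis by simp
qed

lemma u_rep:
  fixes u e :: "nat \<Rightarrow> 'n \<Rightarrow> 'v::real_normed_vector"
  assumes rec: "\<And>t i. u (Suc t) i = (\<Sum>j\<in>UNIV. M t i j *\<^sub>R (u t j + e t j))"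
  shows "u t i = (\<Sum>j\<in>UNIV. Phi 0 t i j *\<^sub>R u 0 j) + (\<Sum>k<t. \<Sum>j\<in>UNIV. Phi k (t - k) i j *\<^sub>R e k j)"
proof (induction t arbitrary: i)
  case 0
  have "(\<Sum>j\<in>UNIV. Phi 0 0 i j *\<^sub>R u 0 j) = (\<Sum>j\<in>UNIV. if j = i then u 0 j else 0)"
    by (rule sum.cong) auto
  then show ?case by simp
next
  case (Suc t)
  have "u (Suc t) i = (\<Sum>j\<in>UNIV. M t i j *\<^sub>R ((\<Sum>m\<in>UNIV. Phi 0 t j m *\<^sub>R u 0 m)
        + (\<Sum>k<t. \<Sum>m\<in>UNIV. Phi k (t - k) j m *\<^sub>R e k m) + e t j))"
    using rec Suc.IH by simp
  also have "\<dots> = (\<Sum>j\<in>UNIV. M t i j *\<^sub>R (\<Sum>m\<in>UNIV. Phi 0 t j m *\<^sub>R u 0 m))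
        + (\<Sum>k<t. \<Sum>j\<in>UNIV. M t i j *\<^sub>R (\<Sum>m\<in>UNIV. Phi k (t - k) j m *\<^sub>R e k m))
        + (\<Sum>j\<in>UNIV. M t i j *\<^sub>R e t j)"
    by (simp add: scaleR_add_right sum.distrib scaleR_sum_right sum.swap[of _ UNIV "{..<t}"])
  also have "(\<Sum>j\<in>UNIV. M t i j *\<^sub>R (\<Sum>m\<in>UNIV. Phi 0 t j m *\<^sub>R u 0 m))
      = (\<Sum>m\<in>UNIV. Phi 0 (Suc t) i m *\<^sub>R u 0 m)"
    by (simp add: sum_scale_swap)
  also have "(\<Sum>k<t. \<Sum>j\<in>UNIV. M t i j *\<^sub>R (\<Sum>m\<in>UNIV. Phi k (t - k) j m *\<^sub>R e k m))
      = (\<Sum>k<t. \<Sum>m\<in>UNIV. Phi k (Suc t - k) i m *\<^sub>R e k m)"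
    by (rule sum.cong) (auto simp: sum_scale_swap Phi_Suc_left)
  also have "(\<Sum>j\<in>UNIV. M t i j *\<^sub>R e t j) = (\<Sum>m\<in>UNIV. Phi t (Suc t - t) i m *\<^sub>R e t m)"
    unfolding Phi_one by (rule refl)
  finally show ?case by (simp add: add.assoc)
qed

lemma u_sum:
  fixes u e :: "nat \<Rightarrow> 'n \<Rightarrow> 'v::real_normed_vector"
  assumes rec: "\<And>t i. u (Suc t) i = (\<Sum>j\<in>UNIV. M t i j *\<^sub>R (u t j + e t j))"
  shows "(\<Sum>i\<in>UNIV. u t i) = (\<Sum>j\<in>UNIV. u 0 j) + (\<Sum>k<t. \<Sum>j\<in>UNIV. e k j)"
proof (induction t)
  case 0
  then show ?case by simp
next
  case (Suc t)
  have "(\<Sum>i\<in>UNIV. u (Suc t) i) = (\<Sum>i\<in>UNIV. \<Sum>j\<in>UNIV. M t i j *\<^sub>R (u t j + e t j))"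
    using rec by simp
  also have "\<dots> = (\<Sum>j\<in>UNIV. \<Sum>i\<in>UNIV. M t i j *\<^sub>R (u t j + e t j))" by (rule sum.swap)
  also have "\<dots> = (\<Sum>j\<in>UNIV. (\<Sum>i\<in>UNIV. M t i j) *\<^sub>R (u t j + e t j))"
    by (simp add: scaleR_sum_left)
  also have "\<dots> = (\<Sum>j\<in>UNIV. u t j) + (\<Sum>j\<in>UNIV. e t j)" by (simp add: M_col sum.distrib)
  finally show ?case using Suc by simp
qed

lemma p_rec:
  assumes rec: "\<And>t i. p (Suc t) i = (\<Sum>j\<in>UNIV. M t i j * p t j)" and p0: "\<And>i. p 0 i = 1"
  shows "p t i = (\<Sum>j\<in>UNIV. Phi 0 t i j)"
proof (induction t arbitrary: i)
  case 0
  then show ?case using p0 by simp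
next
  case (Suc t)
  have "p (Suc t) i = (\<Sum>m\<in>UNIV. M t i m * (\<Sum>j\<in>UNIV. Phi 0 t m j))" using rec Suc by simp
  also have "\<dots> = (\<Sum>m\<in>UNIV. \<Sum>j\<in>UNIV. M t i m * Phi 0 t m j)" by (simp add: sum_distrib_left)
  also have "\<dots> = (\<Sum>j\<in>UNIV. \<Sum>m\<in>UNIV. M t i m * Phi 0 t m j)" by (rule sum.swap)
  finally show ?case by simp
qed

end

context pushsum_graph begin

lemma main_bound:
  "\<exists>C \<rho> \<delta>. 0 < C \<and> 0 < \<rho> \<and> \<rho> < 1 \<and> 0 < \<delta> \<and> (\<forall>t i. \<delta> \<le> (\<Sum>j\<in>UNIV. Phi 0 t i j)) \<and>
    (\<forall>(u::nat \<Rightarrow> 'n \<Rightarrow> 'v::real_normed_vector) e.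
       (\<forall>t i. u (Suc t) i = (\<Sum>j\<in>UNIV. M t i j *\<^sub>R (u t j + e t j))) \<longrightarrow>
       (\<forall>t i. norm (u t i - ((\<Sum>j\<in>UNIV. Phi 0 t i j) / real CARD('n)) *\<^sub>R
                   ((\<Sum>j\<in>UNIV. u 0 j) + (\<Sum>k<t. \<Sum>j\<in>UNIV. e k j)))
            \<le> C * \<rho> ^ t * (\<Sum>j\<in>UNIV. norm (u 0 j)) + (\<Sum>k<t. C * \<rho> ^ (t - k) * (\<Sum>j\<in>UNIV. norm (e k j)))))"
proof -
  obtain C \<rho> where C: "0 < C" "0 < \<rho>" "\<rho> < 1" "\<And>n. q ^ (n div W) \<le> C * \<rho> ^ n"
    using geom by blast
  define \<delta> where "\<delta> = min \<eta> (\<kappa>0 ^ W)"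
  have \<delta>: "0 < \<delta>" using eta_pos k0_pos by (simp add: \<delta>_def)
  have close: "\<bar>Phi k (t - k) i j - (\<Sum>j'\<in>UNIV. Phi 0 t i j') / real CARD('n)\<bar> \<le> C * \<rho> ^ (t - k)"
    if "k \<le> t" for k t i j
  proof -
    have "Phi k (t - k) i j - (\<Sum>j'\<in>UNIV. Phi 0 t i j') / real CARD('n)
        = (\<Sum>j'\<in>UNIV. Phi k (t - k) i j - Phi 0 t i j') / real CARD('n)"
      by (simp add: sum_subtractf field_simps)
    also have "\<bar>\<dots>\<bar> \<le> (\<Sum>j'\<in>(UNIV::'n set). C * \<rho> ^ (t - k)) / real CARD('n)"
    proof -
      have "\<bar>\<Sum>j'\<in>UNIV. Phi k (t - k) i j - Phi 0 t i j'\<bar> \<le> (\<Sum>j'\<in>UNIV. \<bar>Phi k (t - k) i j - Phi 0 t i j'\<bar>)"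
        by (rule sum_abs)
      also have "\<dots> \<le> (\<Sum>j'\<in>(UNIV::'n set). C * \<rho> ^ (t - k))"
        by (rule sum_mono) (use Phi_close[OF that] C(4) order_trans in blast)
      finally have "\<bar>\<Sum>j'\<in>UNIV. Phi k (t - k) i j - Phi 0 t i j'\<bar> \<le> (\<Sum>j'\<in>(UNIV::'n set). C * \<rho> ^ (t - k))" .
      then show ?thesis by (simp add: abs_divide pos_divide_le_eq mult.commute)
    qed
    also have "\<dots> = C * \<rho> ^ (t - k)" by simp
    finally show ?thesis .
  qed
  have main: "norm (u t i - ((\<Sum>j\<in>UNIV. Phi 0 t i j) / real CARD('n)) *\<^sub>R
                   ((\<Sum>j\<in>UNIV. u 0 j) + (\<Sum>k<t. \<Sum>j\<in>UNIV. e k j)))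
            \<le> C * \<rho> ^ t * (\<Sum>j\<in>UNIV. norm (u 0 j)) + (\<Sum>k<t. C * \<rho> ^ (t - k) * (\<Sum>j\<in>UNIV. norm (e k j)))"
    if rec: "\<forall>t i. u (Suc t) i = (\<Sum>j\<in>UNIV. M t i j *\<^sub>R (u t j + e t j))"
    for u e :: "nat \<Rightarrow> 'n \<Rightarrow> 'v::real_normed_vector" and t i
  proof -
    let ?c = "(\<Sum>j\<in>UNIV. Phi 0 t i j) / real CARD('n)"
    have eq: "u t i - ?c *\<^sub>R ((\<Sum>j\<in>UNIV. u 0 j) + (\<Sum>k<t. \<Sum>j\<in>UNIV. e k j))
       = (\<Sum>j\<in>UNIV. (Phi 0 t i j - ?c) *\<^sub>R u 0 j) + (\<Sum>k<t. \<Sum>j\<in>UNIV. (Phi k (t - k) i j - ?c) *\<^sub>R e k j)"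
      unfolding u_rep[of u e t i, OF rec[rule_format]]
      by (simp add: scaleR_diff_left sum_subtractf scaleR_add_right scaleR_sum_right algebra_simps)
    have n1: "norm (\<Sum>j\<in>UNIV. (Phi 0 t i j - ?c) *\<^sub>R u 0 j) \<le> C * \<rho> ^ t * (\<Sum>j\<in>UNIV. norm (u 0 j))"
    proof -
      have "norm (\<Sum>j\<in>UNIV. (Phi 0 t i j - ?c) *\<^sub>R u 0 j) \<le> (\<Sum>j\<in>UNIV. \<bar>Phi 0 t i j - ?c\<bar> * norm (u 0 j))"
        by (rule order_trans[OF norm_sum]) simp
      also have "\<dots> \<le> (\<Sum>j\<in>UNIV. C * \<rho> ^ t * norm (u 0 j))"
        using close[of 0 t i] by (intro sum_mono mult_right_mono) auto
      finally show ?thesis by (simp add: sum_distrib_left)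
    qed
    have n2: "norm (\<Sum>k<t. \<Sum>j\<in>UNIV. (Phi k (t - k) i j - ?c) *\<^sub>R e k j)
        \<le> (\<Sum>k<t. C * \<rho> ^ (t - k) * (\<Sum>j\<in>UNIV. norm (e k j)))"
    proof -
      have "norm (\<Sum>k<t. \<Sum>j\<in>UNIV. (Phi k (t - k) i j - ?c) *\<^sub>R e k j)
          \<le> (\<Sum>k<t. norm (\<Sum>j\<in>UNIV. (Phi k (t - k) i j - ?c) *\<^sub>R e k j))" by (rule norm_sum)
      also have "\<dots> \<le> (\<Sum>k<t. C * \<rho> ^ (t - k) * (\<Sum>j\<in>UNIV. norm (e k j)))"
      proof (rule sum_mono)
        fix k assume k: "k \<in> {..<t}"
        have "norm (\<Sum>j\<in>UNIV. (Phi k (t - k) i j - ?c) *\<^sub>R e k j) \<le> (\<Sum>j\<in>UNIV. \<bar>Phi k (t - k) i j - ?c\<bar> * norm (e k j))"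
          by (rule order_trans[OF norm_sum]) simp
        also have "\<dots> \<le> (\<Sum>j\<in>UNIV. C * \<rho> ^ (t - k) * norm (e k j))"
          using close[of k t i] k by (intro sum_mono mult_right_mono) auto
        finally show "norm (\<Sum>j\<in>UNIV. (Phi k (t - k) i j - ?c) *\<^sub>R e k j) \<le> C * \<rho> ^ (t - k) * (\<Sum>j\<in>UNIV. norm (e k j))"
          by (simp add: sum_distrib_left)
      qed
      finally show ?thesis .
    qed
    show ?thesis unfolding eq by (rule norm_triangle_mono[OF n1 n2])
  qed
  show ?thesis
    apply (rule exI[of _ C], rule exI[of _ \<rho>], rule exI[of _ \<delta>])
    using C \<delta> p_lower main unfolding \<delta>_def by blast
qed

end




definition conv :: "real \<Rightarrow> (nat \<Rightarrow> real) \<Rightarrow> nat \<Rightarrow> real" where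
  "conv \<rho> b t = (\<Sum>k<t. \<rho> ^ (t - k) * b k)"

lemma conv_0 [simp]: "conv \<rho> b 0 = 0" by (simp add: conv_def)

lemma conv_Suc: "conv \<rho> b (Suc t) = \<rho> * (conv \<rho> b t + b t)"
proof -
  have "conv \<rho> b (Suc t) = (\<Sum>k<t. \<rho> ^ (Suc t - k) * b k) + \<rho> * b t"
    by (simp add: conv_def)
  also have "(\<Sum>k<t. \<rho> ^ (Suc t - k) * b k) = \<rho> * (\<Sum>k<t. \<rho> ^ (t - k) * b k)"
    by (simp add: sum_distrib_left Suc_diff_le less_imp_le mult.assoc)
  finally show ?thesis by (simp add: conv_def algebra_simps)
qed

lemma conv_nonneg: "0 \<le> \<rho> \<Longrightarrow> (\<And>k. 0 \<le> b k) \<Longrightarrow> 0 \<le> conv \<rho> b t"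
  unfolding conv_def by (intro sum_nonneg mult_nonneg_nonneg) auto

lemma geo_step:
  fixes \<rho> B :: real
  assumes "0 \<le> \<rho>" "\<rho> < 1" "0 \<le> B"
  shows "\<rho> * (B / (1 - \<rho>) + B) \<le> B / (1 - \<rho>)"
proof -
  have sq: "0 \<le> (1 - \<rho>)^2" by simp
  have h: "\<rho> * (2 - \<rho>) \<le> 1" using sq by (simp add: power2_eq_square algebra_simps)
  have "\<rho> * (B / (1 - \<rho>) + B) = B * (\<rho> * (2 - \<rho>)) / (1 - \<rho>)"
    using assms by (simp add: field_simps)
  also have "\<dots> \<le> B * 1 / (1 - \<rho>)"
    using assms h by (intro divide_right_mono mult_left_mono) auto
  finally show ?thesis by simp
qed

lemma conv_bound:
  assumes "0 \<le> \<rho>" "\<rho> < 1" "\<And>k. b k \<le> B" "0 \<le> B"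
  shows "conv \<rho> b t \<le> B / (1 - \<rho>)"
proof (induction t)
  case 0
  then show ?case using assms by simp
next
  case (Suc t)
  have "conv \<rho> b (Suc t) \<le> \<rho> * (B / (1 - \<rho>) + B)"
    unfolding conv_Suc using Suc assms by (intro mult_left_mono add_mono) auto
  also have "\<dots> \<le> B / (1 - \<rho>)" using assms by (intro geo_step) auto
  finally show ?case .
qed

lemma conv_tendsto:
  assumes r: "0 < \<rho>" "\<rho> < 1" and b0: "\<And>k. 0 \<le> b k" and lim: "b \<longlonglongrightarrow> 0"
  shows "conv \<rho> b \<longlonglongrightarrow> 0"
proof -
  have "\<exists>no. \<forall>n\<ge>no. norm (conv \<rho> b n - 0) < r" if rpos: "0 < r" for r
  proof -
    define \<epsilon> where "\<epsilon> = r * (1 - \<rho>) / 4"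
    have \<epsilon>: "0 < \<epsilon>" using rpos r by (simp add: \<epsilon>_def)
    obtain T where T: "\<And>n. n \<ge> T \<Longrightarrow> b n < \<epsilon>"
      using lim \<epsilon> unfolding LIMSEQ_iff by (metis b0 diff_zero real_norm_def abs_of_nonneg)
    have ind: "conv \<rho> b t \<le> \<rho> ^ (t - T) * conv \<rho> b T + \<epsilon> / (1 - \<rho>)" if "T \<le> t" for t
      using that
    proof (induction t rule: dec_induct)
      case base
      then show ?case using \<epsilon> r by simp
    next
      case (step t)
      have "conv \<rho> b (Suc t) \<le> \<rho> * ((\<rho> ^ (t - T) * conv \<rho> b T + \<epsilon> / (1 - \<rho>)) + \<epsilon>)"
        unfolding conv_Suc using step T[of t] r by (intro mult_left_mono add_mono) auto
      also have "\<dots> = \<rho> ^ (Suc t - T) * conv \<rho> b T + \<rho> * (\<epsilon> / (1 - \<rho>) + \<epsilon>)"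
        using step(1) by (simp add: Suc_diff_le algebra_simps)
      also have "\<rho> * (\<epsilon> / (1 - \<rho>) + \<epsilon>) \<le> \<epsilon> / (1 - \<rho>)"
        using r \<epsilon> by (intro geo_step) auto
      finally show ?case by simp
    qed
    have "(\<lambda>n. \<rho> ^ n * conv \<rho> b T) \<longlonglongrightarrow> 0 * conv \<rho> b T"
      by (intro tendsto_mult tendsto_const LIMSEQ_power_zero) (use r in simp)
    then obtain N where N: "\<And>n. n \<ge> N \<Longrightarrow> \<rho> ^ n * conv \<rho> b T < \<epsilon>"
      unfolding LIMSEQ_iff using \<epsilon> by (metis diff_zero mult_zero_left real_norm_def abs_less_iff)
    show ?thesis
    proof (intro exI allI impI)
      fix n assume n: "n \<ge> T + N"
      have c0: "0 \<le> conv \<rho> b n" using conv_nonneg b0 r by auto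
      have "conv \<rho> b n \<le> \<rho> ^ (n - T) * conv \<rho> b T + \<epsilon> / (1 - \<rho>)" using ind n by auto
      also have "\<dots> < \<epsilon> + \<epsilon> / (1 - \<rho>)" using N[of "n - T"] n by auto
      also have "\<dots> \<le> 2 * \<epsilon> / (1 - \<rho>)"
      proof -
        have "\<epsilon> \<le> \<epsilon> / (1 - \<rho>)" using \<epsilon> r by (simp add: le_divide_eq)
        then show ?thesis by simp
      qed
      also have "\<dots> < r" using rpos r by (simp add: \<epsilon>_def field_simps)
      finally show "norm (conv \<rho> b n - 0) < r" using c0 by simp
    qed
  qed
  then show ?thesis unfolding LIMSEQ_iff by blast
qed

lemma conv_summable:
  assumes r: "0 < \<rho>" "\<rho> < 1" and b0: "\<And>k. 0 \<le> b k"
    and g0: "\<And>t. 0 \<le> \<gamma> t" and gdec: "\<And>t. \<gamma> (Suc t) \<le> \<gamma> t"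
    and sb: "summable (\<lambda>t. \<gamma> t * b t)"
  shows "summable (\<lambda>t. \<gamma> t * conv \<rho> b t)"
proof -
  define d where "d t = \<gamma> t * conv \<rho> b t" for t
  define G where "G = (\<Sum>t. \<gamma> t * b t)"
  have d0: "0 \<le> d t" for t unfolding d_def using g0 conv_nonneg[OF _ b0] r by simp
  have pG: "(\<Sum>t<n. \<gamma> t * b t) \<le> G" for n
    unfolding G_def by (rule sum_le_suminf[OF sb]) (auto intro: mult_nonneg_nonneg g0 b0)
  have dS: "d (Suc t) \<le> \<rho> * (d t + \<gamma> t * b t)" for t
  proof -
    have "d (Suc t) = \<gamma> (Suc t) * (\<rho> * (conv \<rho> b t + b t))" by (simp add: d_def conv_Suc)
    also have "\<dots> \<le> \<gamma> t * (\<rho> * (conv \<rho> b t + b t))"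
      using gdec r conv_nonneg[of \<rho> b t, OF _ b0] b0[of t] by (intro mult_right_mono) auto
    finally show ?thesis by (simp add: d_def algebra_simps)
  qed
  have bnd: "(\<Sum>t<n. d t) \<le> G / (1 - \<rho>)" for n
  proof -
    have "(\<Sum>t<Suc n. d t) = d 0 + (\<Sum>t<n. d (Suc t))" by (rule sum.lessThan_Suc_shift)
    also have "\<dots> \<le> 0 + (\<Sum>t<n. \<rho> * (d t + \<gamma> t * b t))"
      using dS by (intro add_mono sum_mono) (auto simp: d_def)
    also have "\<dots> = \<rho> * (\<Sum>t<n. d t) + \<rho> * (\<Sum>t<n. \<gamma> t * b t)"
      by (simp add: sum_distrib_left sum.distrib algebra_simps)
    also have "\<dots> \<le> \<rho> * (\<Sum>t<n. d t) + G" using pG[of n] r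
      by (smt (verit, ccfv_SIG) mult_left_le_one_le sum_nonneg mult_nonneg_nonneg g0 b0)
    finally have "(\<Sum>t<Suc n. d t) \<le> \<rho> * (\<Sum>t<n. d t) + G" .
    moreover have "(\<Sum>t<n. d t) \<le> (\<Sum>t<Suc n. d t)" using d0 by (simp)
    ultimately have "(1 - \<rho>) * (\<Sum>t<n. d t) \<le> G" by (simp add: algebra_simps)
    then show ?thesis using r by (simp add: field_simps)
  qed
  have "summable d"
  proof (rule bounded_imp_summable[OF d0])
    fix n show "(\<Sum>k\<le>n. d k) \<le> G / (1 - \<rho>)"
      using bnd[of "Suc n"] by (simp add: lessThan_Suc_atMost)
  qed
  then show ?thesis by (simp add: d_def[abs_def])
qed




lemma norm_sq_comb:
  fixes x y :: "'a::real_inner"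
  assumes "u + v = 1"
  shows "(norm (u *\<^sub>R x + v *\<^sub>R y))\<^sup>2 = u * (norm x)\<^sup>2 + v * (norm y)\<^sup>2 - u * v * (norm (x - y))\<^sup>2"
proof -
  have v: "v = 1 - u" using assms by simp
  show ?thesis unfolding v power2_norm_eq_inner
    by (simp add: inner_add_left inner_add_right inner_diff_left inner_diff_right algebra_simps inner_commute)
qed

lemma sconvex_ineq:
  fixes f :: "'a::real_inner \<Rightarrow> real"
  assumes sc: "strongly_convex_on S f \<tau>" and x: "x \<in> S" and y: "y \<in> S"
    and u: "0 \<le> u" "0 \<le> v" "u + v = 1"
  shows "f (u *\<^sub>R x + v *\<^sub>R y) \<le> u * f x + v * f y - \<tau> / 2 * (u * v * (norm (x - y))\<^sup>2)"
proof -
  have "f (u *\<^sub>R x + v *\<^sub>R y) - \<tau> / 2 * (norm (u *\<^sub>R x + v *\<^sub>R y))\<^sup>2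
      \<le> u * (f x - \<tau> / 2 * (norm x)\<^sup>2) + v * (f y - \<tau> / 2 * (norm y)\<^sup>2)"
    using sc x y u unfolding strongly_convex_on_def convex_on_def by blast
  then show ?thesis unfolding norm_sq_comb[OF u(3)] by (simp add: algebra_simps)
qed

lemma sconvex_convex:
  fixes f :: "'a::real_inner \<Rightarrow> real"
  assumes sc: "strongly_convex_on S f \<tau>" and \<tau>: "0 \<le> \<tau>"
  shows "convex_on S f"
  unfolding convex_on_def
proof (intro conjI ballI allI impI)
  show "convex S" using sc unfolding strongly_convex_on_def convex_on_def by blast
  fix x y u v :: _ assume xy: "x \<in> S" "y \<in> S" and u: "(0::real) \<le> u" "0 \<le> v" "u + v = 1"
  have "f (u *\<^sub>R x + v *\<^sub>R y) \<le> u * f x + v * f y - \<tau> / 2 * (u * v * (norm (x - y))\<^sup>2)"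
    by (rule sconvex_ineq[OF sc xy u])
  moreover have "0 \<le> \<tau> / 2 * (u * v * (norm (x - y))\<^sup>2)" using \<tau> u by simp
  ultimately show "f (u *\<^sub>R x + v *\<^sub>R y) \<le> u * f x + v * f y" by linarith
qed

lemma tangent_ineq:
  fixes f :: "'a::real_inner \<Rightarrow> real"
  assumes cv: "convex_on S f" and x: "x \<in> S" and y: "y \<in> S"
    and d: "(f has_derivative (\<lambda>h. g \<bullet> h)) (at x)"
  shows "f x + g \<bullet> (y - x) \<le> f y"
proof -
  let ?v = "y - x"
  have lin: "((\<lambda>s::real. x + s *\<^sub>R ?v) has_derivative (\<lambda>s. s *\<^sub>R ?v)) (at 0)"
    by (auto intro!: derivative_eq_intros)
  have d': "(f has_derivative (\<lambda>h. g \<bullet> h)) (at (x + 0 *\<^sub>R ?v))" using d by simp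
  have c: "((\<lambda>s::real. f (x + s *\<^sub>R ?v)) has_derivative (\<lambda>s. g \<bullet> (s *\<^sub>R ?v))) (at 0)"
    by (rule has_derivative_compose[OF lin d'])
  then have c2: "((\<lambda>s::real. f (x + s *\<^sub>R ?v)) has_derivative (\<lambda>s. s * (g \<bullet> ?v))) (at 0)"
    by (simp add: inner_scaleR_right)
  have e: "(\<lambda>s. s * (g \<bullet> ?v)) = (*) (g \<bullet> ?v)" by (rule ext) simp
  have "((\<lambda>s::real. f (x + s *\<^sub>R ?v)) has_derivative (*) (g \<bullet> ?v)) (at 0)"
    using c2 unfolding e .
  then have "((\<lambda>s::real. f (x + s *\<^sub>R ?v)) has_field_derivative (g \<bullet> ?v)) (at 0)"
    unfolding has_field_derivative_def .
  then have lim: "((\<lambda>s. (f (x + s *\<^sub>R ?v) - f x) / s) \<longlongrightarrow> g \<bullet> ?v) (at 0)"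
    unfolding has_field_derivative_iff by simp
  have al: "at_right (0::real) \<le> at 0" by (rule at_le) simp
  have lim': "((\<lambda>s. (f (x + s *\<^sub>R ?v) - f x) / s) \<longlongrightarrow> g \<bullet> ?v) (at_right 0)"
    using tendsto_mono[OF al lim] .
  have ev: "eventually (\<lambda>s. (f (x + s *\<^sub>R ?v) - f x) / s \<le> f y - f x) (at_right (0::real))"
    using eventually_at_right_real[OF zero_less_one]
  proof (rule eventually_mono)
    fix s :: real assume s: "s \<in> {0<..<1}"
    have "x + s *\<^sub>R ?v = (1 - s) *\<^sub>R x + s *\<^sub>R y" by (simp add: algebra_simps)
    moreover have "f ((1 - s) *\<^sub>R x + s *\<^sub>R y) \<le> (1 - s) * f x + s * f y"
      using convex_onD[OF cv, of s x y] s x y by auto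
    ultimately have "f (x + s *\<^sub>R ?v) - f x \<le> s * (f y - f x)" by (simp add: algebra_simps)
    then show "(f (x + s *\<^sub>R ?v) - f x) / s \<le> f y - f x" using s by (simp add: divide_le_eq mult.commute)
  qed
  have "g \<bullet> ?v \<le> f y - f x"
    by (rule tendsto_upperbound[OF lim' ev]) simp
  then show ?thesis by simp
qed

lemma subgrad_exists:
  fixes r :: "'a::euclidean_space \<Rightarrow> real"
  assumes cv: "convex_on UNIV r"
  shows "\<exists>g. is_subgradient r x g"
proof -
  define S where "S = {p :: 'a \<times> real. r (fst p) < snd p}"
  define T where "T = {(x, r x)}"
  have cS: "convex S" unfolding convex_def S_def
  proof (intro ballI allI impI, simp only: mem_Collect_eq)
    fix p q :: "'a \<times> real" and u v :: real
    assume p: "r (fst p) < snd p" and q: "r (fst q) < snd q" and u: "0 \<le> u" "0 \<le> v" "u + v = 1"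
    have "r (u *\<^sub>R fst p + v *\<^sub>R fst q) \<le> u * r (fst p) + v * r (fst q)"
      using cv u unfolding convex_on_def by auto
    also have "\<dots> < u * snd p + v * snd q"
    proof (cases "u = 0")
      case True
      then show ?thesis using q u by simp
    next
      case False
      then have "u * r (fst p) < u * snd p" using p u by simp
      moreover have "v * r (fst q) \<le> v * snd q" using q u by (simp add: mult_left_mono)
      ultimately show ?thesis by linarith
    qed
    finally show "r (fst (u *\<^sub>R p + v *\<^sub>R q)) < snd (u *\<^sub>R p + v *\<^sub>R q)" by simp
  qed
  have cT: "convex T" by (simp add: T_def)
  have "(x, r x + 1) \<in> S" by (simp add: S_def)
  then have ne: "S \<noteq> {}" by blast
  have dis: "S \<inter> T = {}" by (auto simp: S_def T_def)
  obtain a b where ab: "a \<noteq> 0" "\<forall>p\<in>S. inner a p \<le> b" "\<forall>p\<in>T. inner a p \<ge> b"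
    using separating_hyperplane_sets[OF cS cT ne _ dis] by (auto simp: T_def)
  obtain g c where a: "a = (g, c)" by (cases a)
  have key: "g \<bullet> z + c * s \<le> g \<bullet> x + c * r x" if "r z < s" for z s
  proof -
    have "inner a (z, s) \<le> b" using ab(2) that by (auto simp: S_def)
    moreover have "b \<le> inner a (x, r x)" using ab(3) by (auto simp: T_def)
    ultimately show ?thesis by (simp add: a)
  qed
  have c0: "c \<le> 0" using key[of x "r x + 1"] by (simp add: algebra_simps)
  have cne: "c \<noteq> 0"
  proof
    assume c: "c = 0"
    then have "g \<noteq> 0" using ab(1) a by (simp add: zero_prod_def)
    have "g \<bullet> (x + g) \<le> g \<bullet> x" using key[of "x + g" "r (x + g) + 1"] c by simp
    then have "g \<bullet> g \<le> 0" by (simp add: inner_add_right)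
    then show False using \<open>g \<noteq> 0\<close> inner_gt_zero_iff[of g] by linarith
  qed
  have cneg: "c < 0" using c0 cne by simp
  show ?thesis
  proof (intro exI)
    show "is_subgradient r x (- (1 / c) *\<^sub>R g)"
      unfolding is_subgradient_def
    proof
      fix z
      show "r x + (- (1 / c) *\<^sub>R g) \<bullet> (z - x) \<le> r z"
      proof (rule ccontr)
        assume "\<not> ?thesis"
        then have lt: "r z < r x + (- (1 / c) *\<^sub>R g) \<bullet> (z - x)" by simp
        obtain s where rs: "r z < s" and s2: "s < r x + (- (1 / c) *\<^sub>R g) \<bullet> (z - x)"
          using dense[OF lt] by blast
        have "g \<bullet> z + c * s \<le> g \<bullet> x + c * r x" using key[OF rs] .
        moreover have "c * (r x + (- (1 / c) *\<^sub>R g) \<bullet> (z - x)) < c * s"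
          using s2 cneg by (simp add: mult_less_cancel_left_neg)
        moreover have "c * (r x + (- (1 / c) *\<^sub>R g) \<bullet> (z - x)) = c * r x - g \<bullet> (z - x)"
          using cne by (simp add: algebra_simps inner_diff_right)
        ultimately show False by (simp add: inner_diff_right)
      qed
    qed
  qed
qed

lemma step_bound:
  fixes ft :: "'a::euclidean_space \<Rightarrow> real" and r :: "'a \<Rightarrow> real"
  assumes sc: "strongly_convex_on S ft \<tau>" and \<tau>: "0 < \<tau>"
    and z0: "z0 \<in> S" and z1: "z1 \<in> S"
    and d: "(ft has_derivative (\<lambda>h. g0 \<bullet> h)) (at z0)"
    and rc: "convex_on UNIV r" and gr: "is_subgradient r z0 gr"
    and mn: "\<And>z. z \<in> S \<Longrightarrow> ft z1 + c \<bullet> (z1 - w) + r z1 \<le> ft z + c \<bullet> (z - w) + r z"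
  shows "norm (z1 - z0) \<le> 4 * (norm g0 + norm c + norm gr) / \<tau>"
proof -
  define F where "F z = ft z + c \<bullet> (z - w) + r z" for z
  define D where "D = norm (z1 - z0)"
  define K where "K = norm g0 + norm c + norm gr"
  let ?zm = "(1/2) *\<^sub>R z0 + (1/2) *\<^sub>R z1"
  have cS: "convex S" using sc unfolding strongly_convex_on_def convex_on_def by blast
  have zm: "?zm \<in> S" using cS z0 z1 unfolding convex_def by auto
  have f1: "ft ?zm \<le> (1/2) * ft z0 + (1/2) * ft z1 - \<tau> / 2 * ((1/2) * (1/2) * D\<^sup>2)"
    using sconvex_ineq[OF sc z0 z1, of "1/2" "1/2"] by (simp add: D_def norm_minus_commute)
  have f2: "r ?zm \<le> (1/2) * r z0 + (1/2) * r z1"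
    using convex_onD[OF rc, of "1/2" z0 z1] by simp
  have f3: "c \<bullet> (?zm - w) = (1/2) * (c \<bullet> (z0 - w)) + (1/2) * (c \<bullet> (z1 - w))"
    by (simp add: inner_diff_right inner_add_right field_simps)
  have "F z1 \<le> F ?zm" using mn[OF zm] by (simp add: F_def)
  then have A: "\<tau> / 4 * D\<^sup>2 \<le> F z0 - F z1" using f1 f2 f3 by (simp add: F_def algebra_simps)
  have t1: "ft z0 + g0 \<bullet> (z1 - z0) \<le> ft z1"
    by (rule tangent_ineq[OF sconvex_convex[OF sc] z0 z1 d]) (use \<tau> in simp)
  have t2: "r z0 + gr \<bullet> (z1 - z0) \<le> r z1" using gr unfolding is_subgradient_def by blast
  have "F z0 - F z1 = ft z0 - ft z1 + c \<bullet> (z0 - z1) + r z0 - r z1"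
    by (simp add: F_def inner_diff_right)
  also have "\<dots> \<le> - (g0 \<bullet> (z1 - z0)) + c \<bullet> (z0 - z1) - gr \<bullet> (z1 - z0)" using t1 t2 by linarith
  also have "\<dots> \<le> K * D"
  proof -
    have "- (g0 \<bullet> (z1 - z0)) \<le> norm g0 * D" unfolding D_def
      using Cauchy_Schwarz_ineq2[of g0 "z1 - z0"] by (simp add: abs_le_iff)
    moreover have "c \<bullet> (z0 - z1) \<le> norm c * D" unfolding D_def
      using Cauchy_Schwarz_ineq2[of c "z0 - z1"] by (simp add: abs_le_iff norm_minus_commute)
    moreover have "- (gr \<bullet> (z1 - z0)) \<le> norm gr * D" unfolding D_def
      using Cauchy_Schwarz_ineq2[of gr "z1 - z0"] by (simp add: abs_le_iff)
    ultimately show ?thesis by (simp add: K_def algebra_simps)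
  qed
  finally have B: "\<tau> / 4 * D\<^sup>2 \<le> K * D" using A by linarith
  show ?thesis
  proof (cases "D = 0")
    case True
    then show ?thesis using \<tau> by (simp add: D_def)
  next
    case False
    then have Dp: "0 < D" by (simp add: D_def)
    from B have "\<tau> / 4 * D * D \<le> K * D" by (simp add: power2_eq_square mult.assoc)
    then have "\<tau> / 4 * D \<le> K" using Dp by simp
    then show ?thesis using \<tau> by (simp add: D_def K_def field_simps)
  qed
qed




locale setting =
  fixes gf :: "'n::finite \<Rightarrow> real^'d::finite^'b::finite \<Rightarrow> real^'d^'b"
    and r :: "'b \<Rightarrow> real^'d \<Rightarrow> real"
    and Kb :: "'b \<Rightarrow> (real^'d) set"
    and E :: "('n \<times> 'n) set"
    and sel :: "nat \<Rightarrow> 'n \<Rightarrow> 'b"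
    and A :: "nat \<Rightarrow> 'b \<Rightarrow> 'n \<Rightarrow> 'n \<Rightarrow> real"
    and \<kappa> :: real
    and ft :: "'n \<Rightarrow> 'b \<Rightarrow> real^'d \<Rightarrow> real^'d^'b \<Rightarrow> real"
    and gft :: "'n \<Rightarrow> 'b \<Rightarrow> real^'d \<Rightarrow> real^'d^'b \<Rightarrow> real^'d"
    and \<tau> :: "'n \<Rightarrow> real"
    and \<gamma> :: "nat \<Rightarrow> real"
    and x y :: "nat \<Rightarrow> 'n \<Rightarrow> real^'d^'b"
    and \<phi> :: "nat \<Rightarrow> 'n \<Rightarrow> 'b \<Rightarrow> real"
    and xt :: "nat \<Rightarrow> 'n \<Rightarrow> real^'d"
  assumes K_convex: "\<And>l. convex (Kb l)"
    and gf_lip: "\<And>i. \<exists>L. \<forall>u\<in>prodset Kb. \<forall>v\<in>prodset Kb. norm (gf i u - gf i v) \<le> L * norm (u - v)"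
    and gf_bdd: "\<And>i. \<exists>M. \<forall>u\<in>prodset Kb. norm (gf i u) \<le> M"
    and r_convex: "\<And>l. convex_on UNIV (r l)"
    and r_subgrad_bdd: "\<And>l. \<exists>M. \<forall>u\<in>Kb l. \<forall>g. is_subgradient (r l) u g \<longrightarrow> norm g \<le> M"
    and E_loops: "\<And>i. (i, i) \<in> E"
    and E_sc: "\<And>i j. (i, j) \<in> E\<^sup>*"
    and sel_ess_cyclic: "\<And>i. \<exists>T>0. \<forall>t. (\<lambda>s. sel (t + s) i) ` {..<T} = UNIV"
    and \<kappa>_pos: "\<kappa> > 0"
    and A_pos: "\<And>t l i j. (j, i) \<in> edges_blk E sel t l \<Longrightarrow> A t l i j > \<kappa>"
    and A_zero: "\<And>t l i j. (j, i) \<notin> edges_blk E sel t l \<Longrightarrow> A t l i j = 0"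
    and A_colstoch: "\<And>t l j. (\<Sum>i\<in>UNIV. A t l i j) = 1"
    and \<tau>_pos: "\<And>i. \<tau> i > 0"
    and ft_deriv: "\<And>i l u z. u \<in> prodset Kb \<Longrightarrow> z \<in> Kb l \<Longrightarrow>
                 ((\<lambda>w. ft i l w u) has_derivative (\<lambda>h. gft i l z u \<bullet> h)) (at z)"
    and ft_sconvex: "\<And>i l u. u \<in> prodset Kb \<Longrightarrow> strongly_convex_on (Kb l) (\<lambda>z. ft i l z u) (\<tau> i)"
    and ft_grad_consistent: "\<And>i l u. u \<in> prodset Kb \<Longrightarrow> gft i l (u $ l) u = gf i u $ l"
    and \<gamma>_pos: "\<And>t. 0 < \<gamma> t" and \<gamma>_le1: "\<And>t. \<gamma> t \<le> 1"
    and \<gamma>_mono: "\<And>t. \<gamma> (Suc t) \<le> \<gamma> t"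
    and \<gamma>_sq_summable: "summable (\<lambda>t. (\<gamma> t)\<^sup>2)"
    and x0: "\<And>i. x 0 i \<in> prodset Kb"
    and y0: "\<And>i. y 0 i = gf i (x 0 i)"
    and \<phi>0: "\<And>i l. \<phi> 0 i l = 1"
    and xt_in: "\<And>t i. xt t i \<in> Kb (sel t i)"
    and xt_min: "\<And>t i z. z \<in> Kb (sel t i) \<Longrightarrow>
        ft i (sel t i) (xt t i) (x t i)
          + (of_nat CARD('n) *\<^sub>R (y t i $ sel t i) - gf i (x t i) $ sel t i) \<bullet> (xt t i - x t i $ sel t i)
          + r (sel t i) (xt t i)
        \<le> ft i (sel t i) z (x t i)
          + (of_nat CARD('n) *\<^sub>R (y t i $ sel t i) - gf i (x t i) $ sel t i) \<bullet> (z - x t i $ sel t i)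
          + r (sel t i) z"
    and \<phi>_upd: "\<And>t i l. \<phi> (Suc t) i l = (\<Sum>j\<in>nbrs E sel t i l. A t l i j * \<phi> t j l)"
    and x_upd: "\<And>t i l. x (Suc t) i $ l =
        (\<Sum>j\<in>nbrs E sel t i l. (A t l i j * \<phi> t j l / \<phi> (Suc t) i l) *\<^sub>R
            (x t j $ l + \<gamma> t *\<^sub>R (if l = sel t j then xt t j - x t j $ l else 0)))"
    and y_upd: "\<And>t i l. y (Suc t) i $ l =
        (\<Sum>j\<in>nbrs E sel t i l. (A t l i j / \<phi> (Suc t) i l) *\<^sub>R
            (\<phi> t j l *\<^sub>R (y t j $ l) + gf j (x (Suc t) j) $ l - gf j (x t j) $ l))"
begin


lemma div_le_self: "0 \<le> (a::real) \<Longrightarrow> a / real CARD('n) \<le> a"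
proof -
  assume a: "0 \<le> a"
  have "0 < CARD('n)" by simp
  then have "1 \<le> real CARD('n)" by linarith
  then show ?thesis using a by (simp add: divide_le_eq mult_le_cancel_left1)
qed

lemma A_out: "j \<notin> nbrs E sel t i l \<Longrightarrow> A t l i j = 0"
  by (rule A_zero) (auto simp: edges_blk_def)

lemma nbrs_sum:
  fixes F :: "'n \<Rightarrow> 'v::comm_monoid_add"
  assumes "\<And>j. A t l i j = 0 \<Longrightarrow> F j = 0"
  shows "(\<Sum>j\<in>nbrs E sel t i l. F j) = (\<Sum>j\<in>UNIV. F j)"
  by (rule sum.mono_neutral_left) (auto intro: assms A_out)

lemma A_nonneg: "0 \<le> A t l i j"
  using A_pos[of j i t l] A_zero[of j i t l] \<kappa>_pos by fastforce

lemma A_diag: "\<kappa> < A t l i i"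
  by (rule A_pos) (auto simp: edges_blk_def nbrs_def E_loops)

lemma A_le1: "A t l i j \<le> 1"
proof -
  have "A t l i j \<le> (\<Sum>i\<in>UNIV. A t l i j)" by (rule member_le_sum) (auto simp: A_nonneg)
  then show ?thesis by (simp add: A_colstoch)
qed

lemma \<kappa>_lt1: "\<kappa> < 1" using A_diag[of 0 undefined undefined] A_le1[of 0 undefined undefined undefined] by linarith

definition Tf :: "'n \<Rightarrow> nat" where
  "Tf i = (SOME T. T > 0 \<and> (\<forall>t. (\<lambda>s. sel (t + s) i) ` {..<T} = UNIV))"

lemma Tf: "Tf i > 0" "(\<lambda>s. sel (t + s) i) ` {..<Tf i} = UNIV"
  using someI_ex[OF sel_ess_cyclic[of i]] unfolding Tf_def by blast+

definition TT :: nat where "TT = Max (range Tf)"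

lemma TT: "Tf i \<le> TT" "0 < TT"
  using Tf(1)[of i] by (auto simp: TT_def intro: Max_ge order.strict_trans2)

lemma PG: "pushsum_graph (\<lambda>t i j. A t l i j) E \<kappa> TT"
proof (unfold_locales)
  show "\<And>t i j. 0 \<le> A t l i j" by (rule A_nonneg)
  show "\<And>t j. (\<Sum>i\<in>UNIV. A t l i j) = 1" by (rule A_colstoch)
  show "0 < \<kappa>" by (rule \<kappa>_pos)
  show "\<kappa> \<le> 1" using \<kappa>_lt1 by simp
  show "\<And>t i. \<kappa> \<le> A t l i i" using A_diag less_imp_le by blast
  show "0 < TT" by (rule TT)
  show "\<And>i j. (j, i) \<in> E\<^sup>*" by (rule E_sc)
  fix i j s assume ji: "(j, i) \<in> E"
  have "l \<in> (\<lambda>s'. sel (s + s') j) ` {..<Tf j}" using Tf(2)[of s j] by simp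
  then obtain s' where s': "s' < Tf j" "sel (s + s') j = l" by auto
  have "(j, i) \<in> edges_blk E sel (s + s') l" using ji s' by (auto simp: edges_blk_def nbrs_def)
  then have "\<kappa> < A (s + s') l i j" by (rule A_pos)
  then show "\<exists>\<tau>. s \<le> \<tau> \<and> \<tau> < s + TT \<and> \<kappa> \<le> A \<tau> l i j"
    using s' TT(1)[of j] by (intro exI[of _ "s + s'"]) auto
qed

abbreviation "PhiL l \<equiv> pushsum.Phi (\<lambda>t i j. A t l i j)"

lemma phi_eq: "\<phi> t i l = (\<Sum>j\<in>UNIV. PhiL l 0 t i j)"
proof (rule pushsum.p_rec[OF pushsum_graph.axioms(1)[OF PG]])
  show "\<And>t i. \<phi> (Suc t) i l = (\<Sum>j\<in>UNIV. A t l i j * \<phi> t j l)"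
    unfolding \<phi>_upd by (rule nbrs_sum) simp
  show "\<And>i. \<phi> 0 i l = 1" by (rule \<phi>0)
qed

lemma phi_le: "\<phi> t i l \<le> real CARD('n)"
proof -
  have "(\<Sum>j\<in>UNIV. PhiL l 0 t i j) \<le> (\<Sum>j\<in>(UNIV::'n set). 1)"
    by (rule sum_mono) (rule pushsum.Phi_le1[OF pushsum_graph.axioms(1)[OF PG]])
  then show ?thesis by (simp add: phi_eq)
qed


lemma phi_lower: "\<exists>\<delta>>0. \<forall>t i. \<delta> \<le> \<phi> t i l"
proof -
  obtain C \<rho> \<delta> where "0 < \<delta>" "\<forall>t i. \<delta> \<le> (\<Sum>j\<in>UNIV. PhiL l 0 t i j)"
    using pushsum_graph.main_bound[OF PG, where 'v=real] by blast
  then show ?thesis by (auto simp: phi_eq)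
qed

lemma phi_pos: "0 < \<phi> t i l"
  using phi_lower[of l] by (auto intro: order.strict_trans2)

lemma x_in_K: "x t i \<in> prodset Kb"
proof (induction t arbitrary: i)
  case 0
  then show ?case by (rule x0)
next
  case (Suc t)
  show ?case unfolding prodset_def
  proof (intro CollectI allI)
    fix l
    have xin: "x t j $ l \<in> Kb l" for j using Suc[of j] by (simp add: prodset_def)
    have "(\<Sum>j\<in>nbrs E sel t i l. A t l i j * \<phi> t j l / \<phi> (Suc t) i l) = 1"
      using phi_pos[of "Suc t" i l] by (simp add: sum_divide_distrib[symmetric] \<phi>_upd[symmetric])
    moreover have "x t j $ l + \<gamma> t *\<^sub>R (if l = sel t j then xt t j - x t j $ l else 0) \<in> Kb l" for j
    proof (cases "l = sel t j")
      case True
      have "x t j $ l + \<gamma> t *\<^sub>R (xt t j - x t j $ l) = (1 - \<gamma> t) *\<^sub>R (x t j $ l) + \<gamma> t *\<^sub>R xt t j"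
        by (simp add: algebra_simps)
      moreover have "(1 - \<gamma> t) *\<^sub>R (x t j $ l) + \<gamma> t *\<^sub>R xt t j \<in> Kb l"
        using K_convex[of l] xin[of j] xt_in[of t j] True \<gamma>_pos[of t] \<gamma>_le1[of t]
        unfolding convex_def by auto
      ultimately show ?thesis using True by simp
    next
      case False
      then show ?thesis using xin by simp
    qed
    ultimately show "x (Suc t) i $ l \<in> Kb l"
      unfolding x_upd
      by (intro convex_sum) (auto simp: K_convex A_nonneg phi_pos less_imp_le)
  qed
qed

lemma conv_mono: "0 \<le> \<rho> \<Longrightarrow> (\<And>k. b k \<le> b' k) \<Longrightarrow> conv \<rho> b t \<le> conv \<rho> b' t"
  unfolding conv_def by (intro sum_mono mult_left_mono) auto

definition Eall :: "nat \<Rightarrow> real" where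
  "Eall k = (\<Sum>j\<in>UNIV. norm (gf j (x (Suc k) j) - gf j (x k j)))"

lemma Eall_nonneg: "0 \<le> Eall k" unfolding Eall_def by (simp add: sum_nonneg)

lemma y_block: "\<exists>K \<rho>. 0 \<le> K \<and> 0 < \<rho> \<and> \<rho> < 1 \<and> (\<forall>t i.
   norm (y t i $ l - (1 / real CARD('n)) *\<^sub>R (\<Sum>j\<in>UNIV. gf j (x t j) $ l)) \<le> K * (\<rho> ^ t + conv \<rho> Eall t))"
proof -
  define u where "u t i = \<phi> t i l *\<^sub>R (y t i $ l)" for t i
  define e where "e t j = gf j (x (Suc t) j) $ l - gf j (x t j) $ l" for t j
  have rec: "\<forall>t i. u (Suc t) i = (\<Sum>j\<in>UNIV. A t l i j *\<^sub>R (u t j + e t j))"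
  proof (intro allI)
    fix t i
    have "u (Suc t) i = \<phi> (Suc t) i l *\<^sub>R (\<Sum>j\<in>nbrs E sel t i l. (A t l i j / \<phi> (Suc t) i l) *\<^sub>R
            (\<phi> t j l *\<^sub>R (y t j $ l) + gf j (x (Suc t) j) $ l - gf j (x t j) $ l))"
      by (simp add: u_def y_upd)
    also have "\<dots> = (\<Sum>j\<in>nbrs E sel t i l. A t l i j *\<^sub>R (u t j + e t j))"
      using phi_pos[of "Suc t" i l]
      by (simp add: scaleR_sum_right u_def e_def algebra_simps)
    also have "\<dots> = (\<Sum>j\<in>UNIV. A t l i j *\<^sub>R (u t j + e t j))" by (rule nbrs_sum) simp
    finally show "u (Suc t) i = (\<Sum>j\<in>UNIV. A t l i j *\<^sub>R (u t j + e t j))" .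
  qed
  obtain C \<rho> \<delta> where C: "0 < C" "0 < \<rho>" "\<rho> < 1" "0 < \<delta>" and p: "\<forall>t i. \<delta> \<le> (\<Sum>j\<in>UNIV. PhiL l 0 t i j)"
    and mb: "\<forall>(u::nat \<Rightarrow> 'n \<Rightarrow> real^'d) e.
       (\<forall>t i. u (Suc t) i = (\<Sum>j\<in>UNIV. A t l i j *\<^sub>R (u t j + e t j))) \<longrightarrow>
       (\<forall>t i. norm (u t i - ((\<Sum>j\<in>UNIV. PhiL l 0 t i j) / real CARD('n)) *\<^sub>R
                   ((\<Sum>j\<in>UNIV. u 0 j) + (\<Sum>k<t. \<Sum>j\<in>UNIV. e k j)))
            \<le> C * \<rho> ^ t * (\<Sum>j\<in>UNIV. norm (u 0 j)) + (\<Sum>k<t. C * \<rho> ^ (t - k) * (\<Sum>j\<in>UNIV. norm (e k j))))"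
    using pushsum_graph.main_bound[OF PG, where 'v="real^'d"] by blast
  define U0 where "U0 = (\<Sum>j\<in>UNIV. norm (u 0 j))"
  have U0: "0 \<le> U0" unfolding U0_def by (simp add: sum_nonneg)
  define K where "K = C * (U0 + 1) / \<delta>"
  have K: "0 \<le> K" using C U0 by (simp add: K_def)
  have S: "(\<Sum>j\<in>UNIV. u 0 j) + (\<Sum>k<t. \<Sum>j\<in>UNIV. e k j) = (\<Sum>j\<in>UNIV. gf j (x t j) $ l)" for t
  proof -
    have "(\<Sum>k<t. \<Sum>j\<in>UNIV. e k j) = (\<Sum>j\<in>UNIV. \<Sum>k<t. e k j)" by (rule sum.swap)
    also have "\<dots> = (\<Sum>j\<in>UNIV. gf j (x t j) $ l - gf j (x 0 j) $ l)"
      unfolding e_def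
    proof (rule sum.cong[OF refl])
      fix j
      show "(\<Sum>k<t. gf j (x (Suc k) j) $ l - gf j (x k j) $ l) = gf j (x t j) $ l - gf j (x 0 j) $ l"
        by (rule sum_lessThan_telescope[where f="\<lambda>k. gf j (x k j) $ l" and m=t])
    qed
    finally show ?thesis by (simp add: u_def \<phi>0 y0 sum_subtractf)
  qed
  have El: "(\<Sum>j\<in>UNIV. norm (e k j)) \<le> Eall k" for k
    unfolding Eall_def e_def
  proof (rule sum_mono)
    fix j
    show "norm (gf j (x (Suc k) j) $ l - gf j (x k j) $ l) \<le> norm (gf j (x (Suc k) j) - gf j (x k j))"
      using Finite_Cartesian_Product.norm_nth_le[of "gf j (x (Suc k) j) - gf j (x k j)" l] by simp
  qed
  have "norm (y t i $ l - (1 / real CARD('n)) *\<^sub>R (\<Sum>j\<in>UNIV. gf j (x t j) $ l)) \<le> K * (\<rho> ^ t + conv \<rho> Eall t)" for t i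
  proof -
    let ?G = "\<Sum>j\<in>UNIV. gf j (x t j) $ l"
    have ph: "\<phi> t i l = (\<Sum>j\<in>UNIV. PhiL l 0 t i j)" by (rule phi_eq)
    have pp: "\<delta> \<le> \<phi> t i l" using p ph by simp
    have b: "norm (u t i - (\<phi> t i l / real CARD('n)) *\<^sub>R ?G)
        \<le> C * \<rho> ^ t * U0 + (\<Sum>k<t. C * \<rho> ^ (t - k) * (\<Sum>j\<in>UNIV. norm (e k j)))"
    proof -
      have b0: "norm (u t i - ((\<Sum>j\<in>UNIV. PhiL l 0 t i j) / real CARD('n)) *\<^sub>R
                   ((\<Sum>j\<in>UNIV. u 0 j) + (\<Sum>k<t. \<Sum>j\<in>UNIV. e k j)))
            \<le> C * \<rho> ^ t * (\<Sum>j\<in>UNIV. norm (u 0 j)) + (\<Sum>k<t. C * \<rho> ^ (t - k) * (\<Sum>j\<in>UNIV. norm (e k j)))"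
        using mb rec by blast
      then show ?thesis unfolding U0_def ph[symmetric] S .
    qed
    have b2: "(\<Sum>k<t. C * \<rho> ^ (t - k) * (\<Sum>j\<in>UNIV. norm (e k j))) \<le> C * conv \<rho> Eall t"
    proof -
      have eq: "C * conv \<rho> Eall t = (\<Sum>k<t. C * \<rho> ^ (t - k) * Eall k)"
        unfolding conv_def by (simp add: sum_distrib_left mult.assoc)
      have "(\<Sum>k<t. C * \<rho> ^ (t - k) * (\<Sum>j\<in>UNIV. norm (e k j))) \<le> (\<Sum>k<t. C * \<rho> ^ (t - k) * Eall k)"
      proof (rule sum_mono)
        fix k
        have "0 \<le> C * \<rho> ^ (t - k)" using C by simp
        then show "C * \<rho> ^ (t - k) * (\<Sum>j\<in>UNIV. norm (e k j)) \<le> C * \<rho> ^ (t - k) * Eall k"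
          using El[of k] by (rule mult_left_mono[rotated])
      qed
      then show ?thesis unfolding eq .
    qed
    have "y t i $ l - (1 / real CARD('n)) *\<^sub>R ?G = (1 / \<phi> t i l) *\<^sub>R (u t i - (\<phi> t i l / real CARD('n)) *\<^sub>R ?G)"
      using phi_pos[of t i l] by (simp add: u_def algebra_simps)
    then have "norm (y t i $ l - (1 / real CARD('n)) *\<^sub>R ?G) = norm (u t i - (\<phi> t i l / real CARD('n)) *\<^sub>R ?G) / \<phi> t i l"
      using phi_pos[of t i l] by simp
    also have "\<dots> \<le> (C * \<rho> ^ t * U0 + C * conv \<rho> Eall t) / \<delta>"
      using b b2 pp C phi_pos[of t i l]
      by (intro frac_le) (auto intro!: add_nonneg_nonneg mult_nonneg_nonneg U0 conv_nonneg Eall_nonneg)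
    also have "\<dots> \<le> K * (\<rho> ^ t + conv \<rho> Eall t)"
    proof -
      have cv: "0 \<le> conv \<rho> Eall t" using C by (intro conv_nonneg Eall_nonneg) auto
      have e: "C * (U0 + 1) * (\<rho> ^ t + conv \<rho> Eall t) = (C * \<rho> ^ t * U0 + C * conv \<rho> Eall t) + (C * \<rho> ^ t + C * U0 * conv \<rho> Eall t)"
        by (simp add: algebra_simps)
      have "0 \<le> C * \<rho> ^ t + C * U0 * conv \<rho> Eall t" using C U0 cv by simp
      then have h: "C * \<rho> ^ t * U0 + C * conv \<rho> Eall t \<le> C * (U0 + 1) * (\<rho> ^ t + conv \<rho> Eall t)"
        unfolding e by linarith
      have "(C * \<rho> ^ t * U0 + C * conv \<rho> Eall t) / \<delta> \<le> C * (U0 + 1) * (\<rho> ^ t + conv \<rho> Eall t) / \<delta>"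
        using h C by (intro divide_right_mono) auto
      also have "\<dots> = K * (\<rho> ^ t + conv \<rho> Eall t)" by (simp add: K_def)
      finally show ?thesis .
    qed
    finally show ?thesis .
  qed
  then show ?thesis using K C by blast
qed


definition Gb :: "'n \<Rightarrow> real" where "Gb i = (SOME M. \<forall>u\<in>prodset Kb. norm (gf i u) \<le> M)"

lemma Gb: "u \<in> prodset Kb \<Longrightarrow> norm (gf i u) \<le> Gb i"
  using someI_ex[OF gf_bdd[of i]] unfolding Gb_def by blast

lemma Gb_nonneg: "0 \<le> Gb i"
  using Gb[OF x0[of i], of i] norm_ge_zero order_trans by blast

definition Lb :: "'n \<Rightarrow> real" where "Lb i = (SOME L. \<forall>u\<in>prodset Kb. \<forall>v\<in>prodset Kb. norm (gf i u - gf i v) \<le> L * norm (u - v))"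

lemma Lb: "u \<in> prodset Kb \<Longrightarrow> v \<in> prodset Kb \<Longrightarrow> norm (gf i u - gf i v) \<le> Lb i * norm (u - v)"
  using someI_ex[OF gf_lip[of i]] unfolding Lb_def by blast

definition Mr :: "'b \<Rightarrow> real" where "Mr l = max 0 (SOME M. \<forall>u\<in>Kb l. \<forall>g. is_subgradient (r l) u g \<longrightarrow> norm g \<le> M)"

lemma Mr: "u \<in> Kb l \<Longrightarrow> is_subgradient (r l) u g \<Longrightarrow> norm g \<le> Mr l"
  using someI_ex[OF r_subgrad_bdd[of l]] unfolding Mr_def by fastforce

lemma Mr_nonneg: "0 \<le> Mr l" by (simp add: Mr_def)

definition Gs :: real where "Gs = (\<Sum>j\<in>UNIV. Gb j)"

lemma Gs_nonneg: "0 \<le> Gs" unfolding Gs_def by (simp add: sum_nonneg Gb_nonneg)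

lemma Eall_bound: "Eall k \<le> 2 * Gs"
proof -
  have "Eall k \<le> (\<Sum>j\<in>UNIV. 2 * Gb j)"
    unfolding Eall_def
  proof (rule sum_mono)
    fix j
    have "norm (gf j (x (Suc k) j) - gf j (x k j)) \<le> norm (gf j (x (Suc k) j)) + norm (gf j (x k j))"
      by (rule norm_triangle_ineq4)
    also have "\<dots> \<le> 2 * Gb j" using Gb[OF x_in_K, of j] by (smt (verit))
    finally show "norm (gf j (x (Suc k) j) - gf j (x k j)) \<le> 2 * Gb j" .
  qed
  then show ?thesis by (simp add: Gs_def sum_distrib_left)
qed

lemma avg_bound: "norm ((1 / real CARD('n)) *\<^sub>R (\<Sum>j\<in>UNIV. gf j (x t j) $ l)) \<le> Gs"
proof -
  have "norm (\<Sum>j\<in>UNIV. gf j (x t j) $ l) \<le> (\<Sum>j\<in>UNIV. norm (gf j (x t j) $ l))" by (rule norm_sum)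
  also have "\<dots> \<le> Gs" unfolding Gs_def
  proof (rule sum_mono)
    fix j
    show "norm (gf j (x t j) $ l) \<le> Gb j"
      using Gb[OF x_in_K[of t j], of j] Finite_Cartesian_Product.norm_nth_le[of "gf j (x t j)" l] by linarith
  qed
  finally have a: "norm (\<Sum>j\<in>UNIV. gf j (x t j) $ l) \<le> Gs" .
  have "norm ((1 / real CARD('n)) *\<^sub>R (\<Sum>j\<in>UNIV. gf j (x t j) $ l))
      = norm (\<Sum>j\<in>UNIV. gf j (x t j) $ l) / real CARD('n)" by simp
  also have "\<dots> \<le> norm (\<Sum>j\<in>UNIV. gf j (x t j) $ l)"
    by (rule div_le_self) (auto simp: norm_sum)
  finally show ?thesis using a by linarith
qed

lemma y_bdd_block: "\<exists>B. \<forall>t i. norm (y t i $ l) \<le> B"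
proof -
  obtain K \<rho> where K: "0 \<le> K" "0 < \<rho>" "\<rho> < 1" and b: "\<And>t i.
   norm (y t i $ l - (1 / real CARD('n)) *\<^sub>R (\<Sum>j\<in>UNIV. gf j (x t j) $ l)) \<le> K * (\<rho> ^ t + conv \<rho> Eall t)"
    using y_block[of l] by blast
  have "norm (y t i $ l) \<le> K * (1 + 2 * Gs / (1 - \<rho>)) + Gs" for t i
  proof -
    have c: "conv \<rho> Eall t \<le> 2 * Gs / (1 - \<rho>)"
      using K by (intro conv_bound Eall_bound) (auto simp: Gs_nonneg)
    have r: "\<rho> ^ t \<le> 1" using K by (simp add: power_le_one)
    have "K * (\<rho> ^ t + conv \<rho> Eall t) \<le> K * (1 + 2 * Gs / (1 - \<rho>))"
      using c r K by (intro mult_left_mono add_mono) auto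
    then have "norm (y t i $ l - (1 / real CARD('n)) *\<^sub>R (\<Sum>j\<in>UNIV. gf j (x t j) $ l)) \<le> K * (1 + 2 * Gs / (1 - \<rho>))"
      using b[of t i] by linarith
    moreover have "norm (y t i $ l) \<le> norm ((1 / real CARD('n)) *\<^sub>R (\<Sum>j\<in>UNIV. gf j (x t j) $ l))
        + norm (y t i $ l - (1 / real CARD('n)) *\<^sub>R (\<Sum>j\<in>UNIV. gf j (x t j) $ l))"
      by (rule norm_triangle_sub)
    ultimately show ?thesis using avg_bound[of t l] by linarith
  qed
  then show ?thesis by blast
qed

lemma y_bdd: "\<exists>Y. 0 \<le> Y \<and> (\<forall>t i l. norm (y t i $ l) \<le> Y)"
proof -
  obtain B where B: "\<And>l t i. norm (y t i $ l) \<le> B l"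
    using y_bdd_block by metis
  define Y where "Y = (\<Sum>l\<in>UNIV. max 0 (B l))"
  have "norm (y t i $ l) \<le> Y" for t i l
  proof -
    have "max 0 (B l) \<le> Y" unfolding Y_def by (rule member_le_sum) auto
    moreover have "norm (y t i $ l) \<le> B l" by (rule B)
    ultimately show ?thesis by linarith
  qed
  moreover have "0 \<le> Y" unfolding Y_def by (simp add: sum_nonneg)
  ultimately show ?thesis by blast
qed

lemma delta_bdd: "\<exists>D. 0 \<le> D \<and> (\<forall>t i. norm (xt t i - x t i $ sel t i) \<le> D)"
proof -
  obtain Y where Y: "0 \<le> Y" "\<And>t i l. norm (y t i $ l) \<le> Y" using y_bdd by blast
  define Ms where "Ms = (\<Sum>l\<in>UNIV. Mr l)"
  define Di where "Di i = 4 * (Gb i + (real CARD('n) * Y + Gb i) + Ms) / \<tau> i" for i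
  define D where "D = (\<Sum>i\<in>UNIV. Di i)"
  have Di0: "0 \<le> Di i" for i using \<tau>_pos[of i] Gb_nonneg[of i] Y
    by (auto simp: Di_def Ms_def intro!: divide_nonneg_pos add_nonneg_nonneg sum_nonneg Mr_nonneg)
  have "norm (xt t i - x t i $ sel t i) \<le> Di i" for t i
  proof -
    let ?l = "sel t i"
    let ?x = "x t i"
    let ?c = "of_nat CARD('n) *\<^sub>R (y t i $ ?l) - gf i ?x $ ?l"
    have xK: "?x \<in> prodset Kb" by (rule x_in_K)
    have z0: "?x $ ?l \<in> Kb ?l" using xK by (simp add: prodset_def)
    obtain gr where gr: "is_subgradient (r ?l) (?x $ ?l) gr"
      using subgrad_exists[OF r_convex] by blast
    have "norm (xt t i - ?x $ ?l) \<le> 4 * (norm (gft i ?l (?x $ ?l) ?x) + norm ?c + norm gr) / \<tau> i"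
    proof (rule step_bound[OF ft_sconvex[OF xK] \<tau>_pos z0 xt_in ft_deriv[OF xK z0] r_convex gr])
      fix z assume "z \<in> Kb ?l"
      then show "ft i ?l (xt t i) ?x + ?c \<bullet> (xt t i - ?x $ ?l) + r ?l (xt t i)
          \<le> ft i ?l z ?x + ?c \<bullet> (z - ?x $ ?l) + r ?l z"
        by (rule xt_min)
    qed
    also have "\<dots> \<le> Di i"
    proof -
      have g0: "norm (gft i ?l (?x $ ?l) ?x) \<le> Gb i"
        using ft_grad_consistent[OF xK, of i ?l] Gb[OF xK, of i] Finite_Cartesian_Product.norm_nth_le[of "gf i ?x" ?l] by simp
      have c: "norm ?c \<le> real CARD('n) * Y + Gb i"
      proof -
        have "norm ?c \<le> norm (of_nat CARD('n) *\<^sub>R (y t i $ ?l)) + norm (gf i ?x $ ?l)"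
          by (rule norm_triangle_ineq4)
        also have "norm (of_nat CARD('n) *\<^sub>R (y t i $ ?l)) \<le> real CARD('n) * Y"
          using Y(2)[of t i ?l] by (simp add: mult_left_mono)
        also have "norm (gf i ?x $ ?l) \<le> Gb i" using Gb[OF xK, of i] Finite_Cartesian_Product.norm_nth_le[of "gf i ?x" ?l] by simp
        finally show ?thesis by simp
      qed
      have m: "norm gr \<le> Ms"
      proof -
        have "norm gr \<le> Mr ?l" by (rule Mr[OF z0 gr])
        also have "\<dots> \<le> Ms" unfolding Ms_def by (rule member_le_sum) (auto simp: Mr_nonneg)
        finally show ?thesis .
      qed
      show ?thesis unfolding Di_def using g0 c m \<tau>_pos[of i]
        by (intro divide_right_mono mult_left_mono add_mono) auto
    qed
    finally show ?thesis .
  qed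
  moreover have "Di i \<le> D" for i unfolding D_def by (rule member_le_sum) (auto simp: Di0)
  moreover have "0 \<le> D" unfolding D_def by (simp add: sum_nonneg Di0)
  ultimately show ?thesis by (meson order_trans)
qed


end




context setting begin

definition good :: "(nat \<Rightarrow> real) \<Rightarrow> bool" where
  "good a \<longleftrightarrow> (\<forall>t. 0 \<le> a t) \<and> a \<longlonglongrightarrow> 0 \<and> summable (\<lambda>t. \<gamma> t * a t)"

lemma good_le:
  assumes g: "good b" and a0: "\<And>t. 0 \<le> a t" and ab: "\<And>t. a t \<le> b t"
  shows "good a"
  unfolding good_def
proof (intro conjI allI)
  show "0 \<le> a t" for t by (rule a0)
  show "a \<longlonglongrightarrow> 0"
    by (rule Lim_null_comparison[where g=b]) (use g a0 ab in \<open>auto simp: good_def\<close>)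
  show "summable (\<lambda>t. \<gamma> t * a t)"
  proof (rule summable_comparison_test[where g="\<lambda>t. \<gamma> t * b t"])
    show "\<exists>N. \<forall>n\<ge>N. norm (\<gamma> n * a n) \<le> \<gamma> n * b n"
      using a0 ab \<gamma>_pos by (auto intro!: mult_left_mono simp: abs_mult less_imp_le)
    show "summable (\<lambda>t. \<gamma> t * b t)" using g by (simp add: good_def)
  qed
qed

lemma good_add: "good a \<Longrightarrow> good b \<Longrightarrow> good (\<lambda>t. a t + b t)"
  unfolding good_def
  by (auto intro: tendsto_add_zero simp: distrib_left summable_add)

lemma good_cmult: "0 \<le> c \<Longrightarrow> good a \<Longrightarrow> good (\<lambda>t. c * a t)"
  unfolding good_def
proof (intro conjI allI)
  assume c: "0 \<le> c" and g: "(\<forall>t. 0 \<le> a t) \<and> a \<longlonglongrightarrow> 0 \<and> summable (\<lambda>t. \<gamma> t * a t)"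
  show "0 \<le> c * a t" for t using c g by simp
  show "(\<lambda>t. c * a t) \<longlonglongrightarrow> 0" using g tendsto_mult_right_zero by blast
  have "summable (\<lambda>t. c * (\<gamma> t * a t))" using g by (intro summable_mult) simp
  then show "summable (\<lambda>t. \<gamma> t * (c * a t))" by (simp add: algebra_simps)
qed

lemma good_zero: "good (\<lambda>t. 0)" by (simp add: good_def)

lemma good_sum: "finite I \<Longrightarrow> (\<And>i. i \<in> I \<Longrightarrow> good (f i)) \<Longrightarrow> good (\<lambda>t. \<Sum>i\<in>I. f i t)"
proof (induction I rule: finite_induct)
  case empty
  then show ?case by (simp add: good_zero)
next
  case (insert a I)
  then show ?case by (simp add: good_add)
qed

lemma good_geom: assumes "0 < \<rho>" "\<rho> < 1" shows "good (\<lambda>t. \<rho> ^ t)"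
  unfolding good_def
proof (intro conjI allI)
  show "0 \<le> \<rho> ^ t" for t using assms by simp
  show "(\<lambda>t. \<rho> ^ t) \<longlonglongrightarrow> 0" using assms by (intro LIMSEQ_power_zero) simp
  show "summable (\<lambda>t. \<gamma> t * \<rho> ^ t)"
  proof (rule summable_comparison_test[where g="\<lambda>t. \<rho> ^ t"])
    have "norm (\<gamma> n * \<rho> ^ n) \<le> \<rho> ^ n" for n
    proof -
      have "norm (\<gamma> n * \<rho> ^ n) = \<gamma> n * \<rho> ^ n"
        using assms \<gamma>_pos[of n] by (simp add: abs_mult)
      also have "\<dots> \<le> 1 * \<rho> ^ n" using assms \<gamma>_le1[of n] by (intro mult_right_mono) auto
      finally show ?thesis by simp
    qed
    then show "\<exists>N. \<forall>n\<ge>N. norm (\<gamma> n * \<rho> ^ n) \<le> \<rho> ^ n" by blast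
    show "summable (\<lambda>t. \<rho> ^ t)" using assms by (intro summable_geometric) simp
  qed
qed

lemma good_gamma: "good \<gamma>"
  unfolding good_def
proof (intro conjI allI)
  show "0 \<le> \<gamma> t" for t using \<gamma>_pos less_imp_le by blast
  have "(\<lambda>t. (\<gamma> t)\<^sup>2) \<longlonglongrightarrow> 0" by (rule summable_LIMSEQ_zero[OF \<gamma>_sq_summable])
  then have "(\<lambda>t. sqrt ((\<gamma> t)\<^sup>2)) \<longlonglongrightarrow> sqrt 0" by (rule tendsto_real_sqrt)
  then show "\<gamma> \<longlonglongrightarrow> 0" using \<gamma>_pos by (simp add: less_imp_le)
  show "summable (\<lambda>t. \<gamma> t * \<gamma> t)" using \<gamma>_sq_summable by (simp add: power2_eq_square)
qed

lemma good_conv: assumes "0 < \<rho>" "\<rho> < 1" "good b" shows "good (conv \<rho> b)"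
  using assms unfolding good_def
  by (auto intro: conv_nonneg conv_tendsto conv_summable less_imp_le \<gamma>_pos \<gamma>_mono)

lemma norm_le_comp: "norm (v :: real^'d^'b) \<le> (\<Sum>l\<in>UNIV. norm (v $ l))"
  unfolding norm_vec_def by (rule L2_set_le_sum) simp

lemma x_step_block: "good (\<lambda>t. norm (x (Suc t) i $ l - x t i $ l))"
proof -
  obtain D where D: "0 \<le> D" "\<And>t i. norm (xt t i - x t i $ sel t i) \<le> D" using delta_bdd by blast
  define \<Delta> where "\<Delta> t j = (if l = sel t j then xt t j - x t j $ l else 0)" for t j
  define u where "u t i = \<phi> t i l *\<^sub>R (x t i $ l)" for t i
  define e where "e t j = (\<phi> t j l * \<gamma> t) *\<^sub>R \<Delta> t j" for t j
  have rec: "\<forall>t i. u (Suc t) i = (\<Sum>j\<in>UNIV. A t l i j *\<^sub>R (u t j + e t j))"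
  proof (intro allI)
    fix t i
    have "u (Suc t) i = \<phi> (Suc t) i l *\<^sub>R (\<Sum>j\<in>nbrs E sel t i l. (A t l i j * \<phi> t j l / \<phi> (Suc t) i l) *\<^sub>R
            (x t j $ l + \<gamma> t *\<^sub>R \<Delta> t j))"
      by (simp add: u_def x_upd \<Delta>_def)
    also have "\<dots> = (\<Sum>j\<in>nbrs E sel t i l. A t l i j *\<^sub>R (u t j + e t j))"
      using phi_pos[of "Suc t" i l]
      by (simp add: scaleR_sum_right u_def e_def algebra_simps)
    also have "\<dots> = (\<Sum>j\<in>UNIV. A t l i j *\<^sub>R (u t j + e t j))" by (rule nbrs_sum) simp
    finally show "u (Suc t) i = (\<Sum>j\<in>UNIV. A t l i j *\<^sub>R (u t j + e t j))" .
  qed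
  obtain C \<rho> \<delta> where C: "0 < C" "0 < \<rho>" "\<rho> < 1" "0 < \<delta>" and p: "\<forall>t i. \<delta> \<le> (\<Sum>j\<in>UNIV. PhiL l 0 t i j)"
    and mb: "\<forall>(u::nat \<Rightarrow> 'n \<Rightarrow> real^'d) e.
       (\<forall>t i. u (Suc t) i = (\<Sum>j\<in>UNIV. A t l i j *\<^sub>R (u t j + e t j))) \<longrightarrow>
       (\<forall>t i. norm (u t i - ((\<Sum>j\<in>UNIV. PhiL l 0 t i j) / real CARD('n)) *\<^sub>R
                   ((\<Sum>j\<in>UNIV. u 0 j) + (\<Sum>k<t. \<Sum>j\<in>UNIV. e k j)))
            \<le> C * \<rho> ^ t * (\<Sum>j\<in>UNIV. norm (u 0 j)) + (\<Sum>k<t. C * \<rho> ^ (t - k) * (\<Sum>j\<in>UNIV. norm (e k j))))"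
    using pushsum_graph.main_bound[OF PG, where 'v="real^'d"] by blast
  define U0 where "U0 = (\<Sum>j\<in>UNIV. norm (u 0 j))"
  have U0: "0 \<le> U0" unfolding U0_def by (simp add: sum_nonneg)
  define Ek where "Ek k = (\<Sum>j\<in>UNIV. norm (e k j))" for k
  have Ek0: "0 \<le> Ek k" for k unfolding Ek_def by (simp add: sum_nonneg)
  define S where "S t = (\<Sum>j\<in>UNIV. u 0 j) + (\<Sum>k<t. \<Sum>j\<in>UNIV. e k j)" for t
  define dis where "dis t = norm (x t i $ l - (1 / real CARD('n)) *\<^sub>R S t)" for t
  have Ekb: "Ek k \<le> (real CARD('n) * real CARD('n) * D) * \<gamma> k" for k
  proof -
    have "Ek k \<le> (\<Sum>j\<in>(UNIV::'n set). real CARD('n) * \<gamma> k * D)"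
      unfolding Ek_def
    proof (rule sum_mono)
      fix j
      have nd: "norm (\<Delta> k j) \<le> D" using D by (simp add: \<Delta>_def)
      have "norm (e k j) = \<phi> k j l * \<gamma> k * norm (\<Delta> k j)"
        using phi_pos[of k j l] \<gamma>_pos[of k] by (simp add: e_def abs_mult)
      also have "\<dots> \<le> real CARD('n) * \<gamma> k * D"
        using phi_le[of k j l] phi_pos[of k j l] \<gamma>_pos[of k] nd
        by (intro mult_mono) (auto simp: less_imp_le)
      finally show "norm (e k j) \<le> real CARD('n) * \<gamma> k * D" .
    qed
    then show ?thesis by (simp add: algebra_simps)
  qed
  have gEk: "good Ek"
  proof (rule good_le[OF good_cmult[of "real CARD('n) * real CARD('n) * D", OF _ good_gamma]])
    show "0 \<le> real CARD('n) * real CARD('n) * D" using D by simp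
    show "0 \<le> Ek t" for t by (rule Ek0)
    show "Ek t \<le> real CARD('n) * real CARD('n) * D * \<gamma> t" for t by (rule Ekb)
  qed
  have disb: "dis t \<le> (C / \<delta>) * (\<rho> ^ t * U0 + conv \<rho> Ek t)" for t
  proof -
    have ph: "\<phi> t i l = (\<Sum>j\<in>UNIV. PhiL l 0 t i j)" by (rule phi_eq)
    have pp: "\<delta> \<le> \<phi> t i l" using p ph by simp
    have b: "norm (u t i - (\<phi> t i l / real CARD('n)) *\<^sub>R S t)
        \<le> C * \<rho> ^ t * U0 + (\<Sum>k<t. C * \<rho> ^ (t - k) * Ek k)"
    proof -
      have b0: "norm (u t i - ((\<Sum>j\<in>UNIV. PhiL l 0 t i j) / real CARD('n)) *\<^sub>R
                   ((\<Sum>j\<in>UNIV. u 0 j) + (\<Sum>k<t. \<Sum>j\<in>UNIV. e k j)))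
            \<le> C * \<rho> ^ t * (\<Sum>j\<in>UNIV. norm (u 0 j)) + (\<Sum>k<t. C * \<rho> ^ (t - k) * (\<Sum>j\<in>UNIV. norm (e k j)))"
        using mb rec by blast
      then show ?thesis unfolding U0_def Ek_def S_def ph[symmetric] .
    qed
    have b2: "(\<Sum>k<t. C * \<rho> ^ (t - k) * Ek k) = C * conv \<rho> Ek t"
      unfolding conv_def sum_distrib_left by (simp add: mult.assoc)
    have "x t i $ l - (1 / real CARD('n)) *\<^sub>R S t = (1 / \<phi> t i l) *\<^sub>R (u t i - (\<phi> t i l / real CARD('n)) *\<^sub>R S t)"
      using phi_pos[of t i l] by (simp add: u_def algebra_simps)
    then have "dis t = norm (u t i - (\<phi> t i l / real CARD('n)) *\<^sub>R S t) / \<phi> t i l"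
      using phi_pos[of t i l] by (simp add: dis_def)
    also have "\<dots> \<le> (C * \<rho> ^ t * U0 + C * conv \<rho> Ek t) / \<delta>"
      using b b2 pp C phi_pos[of t i l]
      by (intro frac_le) (auto intro!: add_nonneg_nonneg mult_nonneg_nonneg U0 conv_nonneg Ek0)
    also have "\<dots> = (C / \<delta>) * (\<rho> ^ t * U0 + conv \<rho> Ek t)" by (simp add: field_simps)
    finally show ?thesis .
  qed
  have Sd: "norm ((1 / real CARD('n)) *\<^sub>R S (Suc t) - (1 / real CARD('n)) *\<^sub>R S t) \<le> Ek t" for t
  proof -
    have "(1 / real CARD('n)) *\<^sub>R S (Suc t) - (1 / real CARD('n)) *\<^sub>R S t = (1 / real CARD('n)) *\<^sub>R (\<Sum>j\<in>UNIV. e t j)"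
      by (simp add: S_def algebra_simps)
    then have "norm ((1 / real CARD('n)) *\<^sub>R S (Suc t) - (1 / real CARD('n)) *\<^sub>R S t) = norm (\<Sum>j\<in>UNIV. e t j) / real CARD('n)"
      by simp
    also have "\<dots> \<le> norm (\<Sum>j\<in>UNIV. e t j)" by (rule div_le_self) auto
    also have "\<dots> \<le> Ek t" unfolding Ek_def by (rule norm_sum)
    finally show ?thesis .
  qed
  define K where "K = 2 * (C / \<delta>) * (U0 + 1) + 1"
  have K0: "0 \<le> K" using C U0 by (simp add: K_def)
  have main: "norm (x (Suc t) i $ l - x t i $ l) \<le> K * (\<rho> ^ t + conv \<rho> Ek t + Ek t)" for t
  proof -
    have cv: "0 \<le> conv \<rho> Ek t" using C by (intro conv_nonneg Ek0) auto
    have "norm (x (Suc t) i $ l - x t i $ l) \<le> dis (Suc t) + dis t + Ek t"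
    proof -
      have eq: "x (Suc t) i $ l - x t i $ l = (x (Suc t) i $ l - (1 / real CARD('n)) *\<^sub>R S (Suc t))
          - (x t i $ l - (1 / real CARD('n)) *\<^sub>R S t)
          + ((1 / real CARD('n)) *\<^sub>R S (Suc t) - (1 / real CARD('n)) *\<^sub>R S t)"
        by (simp add: algebra_simps)
      have "norm (x (Suc t) i $ l - x t i $ l) \<le> norm (x (Suc t) i $ l - (1 / real CARD('n)) *\<^sub>R S (Suc t))
          + norm (x t i $ l - (1 / real CARD('n)) *\<^sub>R S t)
          + norm ((1 / real CARD('n)) *\<^sub>R S (Suc t) - (1 / real CARD('n)) *\<^sub>R S t)"
        using norm_triangle_ineq[of "x (Suc t) i $ l - (1 / real CARD('n)) *\<^sub>R S (Suc t) - (x t i $ l - (1 / real CARD('n)) *\<^sub>R S t)"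
              "(1 / real CARD('n)) *\<^sub>R S (Suc t) - (1 / real CARD('n)) *\<^sub>R S t"]
              norm_triangle_ineq4[of "x (Suc t) i $ l - (1 / real CARD('n)) *\<^sub>R S (Suc t)" "x t i $ l - (1 / real CARD('n)) *\<^sub>R S t"]
        unfolding eq by linarith
      then show ?thesis using Sd[of t] unfolding dis_def by linarith
    qed
    also have "dis (Suc t) \<le> (C / \<delta>) * (\<rho> ^ t * U0 + conv \<rho> Ek t + Ek t)"
    proof -
      have "dis (Suc t) \<le> (C / \<delta>) * (\<rho> ^ Suc t * U0 + conv \<rho> Ek (Suc t))" by (rule disb)
      also have "\<rho> ^ Suc t * U0 + conv \<rho> Ek (Suc t) \<le> \<rho> ^ t * U0 + conv \<rho> Ek t + Ek t"
      proof -
        have "\<rho> ^ Suc t * U0 \<le> \<rho> ^ t * U0" using C U0 by (intro mult_right_mono) (auto simp: power_decreasing)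
        moreover have "conv \<rho> Ek (Suc t) \<le> conv \<rho> Ek t + Ek t"
          unfolding conv_Suc using C cv Ek0[of t] by (intro mult_left_le_one_le) auto
        ultimately show ?thesis by linarith
      qed
      then have "(C / \<delta>) * (\<rho> ^ Suc t * U0 + conv \<rho> Ek (Suc t)) \<le> (C / \<delta>) * (\<rho> ^ t * U0 + conv \<rho> Ek t + Ek t)"
        using C by (intro mult_left_mono) auto
      finally show ?thesis .
    qed
    also have "dis t \<le> (C / \<delta>) * (\<rho> ^ t * U0 + conv \<rho> Ek t)" by (rule disb)
    also have "(C / \<delta>) * (\<rho> ^ t * U0 + conv \<rho> Ek t + Ek t) + (C / \<delta>) * (\<rho> ^ t * U0 + conv \<rho> Ek t) + Ek t
        \<le> K * (\<rho> ^ t + conv \<rho> Ek t + Ek t)"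
    proof -
      have r: "0 \<le> \<rho> ^ t" using C by simp
      have "\<rho> ^ t * U0 \<le> \<rho> ^ t * (U0 + 1)" using r by (simp add: mult_left_mono)
      have cd: "0 \<le> C / \<delta>" using C by simp
      have "(C / \<delta>) * (\<rho> ^ t * U0 + conv \<rho> Ek t + Ek t) + (C / \<delta>) * (\<rho> ^ t * U0 + conv \<rho> Ek t) + Ek t
          \<le> (C / \<delta>) * ((U0 + 1) * (\<rho> ^ t + conv \<rho> Ek t + Ek t)) + (C / \<delta>) * ((U0 + 1) * (\<rho> ^ t + conv \<rho> Ek t + Ek t)) + (\<rho> ^ t + conv \<rho> Ek t + Ek t)"
      proof -
        have a1: "\<rho> ^ t * U0 + conv \<rho> Ek t + Ek t \<le> (U0 + 1) * (\<rho> ^ t + conv \<rho> Ek t + Ek t)"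
          using r cv Ek0[of t] U0 by (simp add: algebra_simps)
        have a2: "\<rho> ^ t * U0 + conv \<rho> Ek t \<le> (U0 + 1) * (\<rho> ^ t + conv \<rho> Ek t + Ek t)"
          using r cv Ek0[of t] U0 by (simp add: algebra_simps)
        have "(C / \<delta>) * (\<rho> ^ t * U0 + conv \<rho> Ek t + Ek t) \<le> (C / \<delta>) * ((U0 + 1) * (\<rho> ^ t + conv \<rho> Ek t + Ek t))"
          using a1 cd by (rule mult_left_mono)
        moreover have "(C / \<delta>) * (\<rho> ^ t * U0 + conv \<rho> Ek t) \<le> (C / \<delta>) * ((U0 + 1) * (\<rho> ^ t + conv \<rho> Ek t + Ek t))"
          using a2 cd by (rule mult_left_mono)
        moreover have "Ek t \<le> \<rho> ^ t + conv \<rho> Ek t + Ek t" using r cv by simp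
        ultimately show ?thesis by linarith
      qed
      also have "\<dots> = K * (\<rho> ^ t + conv \<rho> Ek t + Ek t)" using C by (simp add: K_def field_simps)
      finally show ?thesis .
    qed
    finally show ?thesis by simp
  qed
  have "good (\<lambda>t. K * (\<rho> ^ t + conv \<rho> Ek t + Ek t))"
    using C K0 by (intro good_cmult good_add good_geom good_conv gEk) auto
  then show ?thesis by (rule good_le) (use main in auto)
qed

end




context setting begin

lemma b_good: "good (\<lambda>t. \<Sum>j\<in>UNIV. norm (x (Suc t) j - x t j))"
proof (rule good_sum)
  fix j :: 'n
  have g: "good (\<lambda>t. \<Sum>l\<in>UNIV. norm (x (Suc t) j $ l - x t j $ l))"
    by (rule good_sum) (auto intro: x_step_block)
  show "good (\<lambda>t. norm (x (Suc t) j - x t j))"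
  proof (rule good_le[OF g])
    show "0 \<le> norm (x (Suc t) j - x t j)" for t by simp
    show "norm (x (Suc t) j - x t j) \<le> (\<Sum>l\<in>UNIV. norm (x (Suc t) j $ l - x t j $ l))" for t
      using norm_le_comp[of "x (Suc t) j - x t j"] by simp
  qed
qed simp

lemma Eall_good: "good Eall"
proof -
  define Ls where "Ls = (\<Sum>j\<in>UNIV. \<bar>Lb j\<bar>)"
  have Ls0: "0 \<le> Ls" unfolding Ls_def by (simp add: sum_nonneg)
  have "Eall k \<le> Ls * (\<Sum>j\<in>UNIV. norm (x (Suc k) j - x k j))" for k
  proof -
    have "Eall k \<le> (\<Sum>j\<in>UNIV. Ls * norm (x (Suc k) j - x k j))"
      unfolding Eall_def
    proof (rule sum_mono)
      fix j
      have "norm (gf j (x (Suc k) j) - gf j (x k j)) \<le> Lb j * norm (x (Suc k) j - x k j)"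
        by (rule Lb[OF x_in_K x_in_K])
      also have "\<dots> \<le> Ls * norm (x (Suc k) j - x k j)"
      proof (rule mult_right_mono)
        have "\<bar>Lb j\<bar> \<le> Ls" unfolding Ls_def by (rule member_le_sum) auto
        then show "Lb j \<le> Ls" by linarith
      qed simp
      finally show "norm (gf j (x (Suc k) j) - gf j (x k j)) \<le> Ls * norm (x (Suc k) j - x k j)" .
    qed
    then show ?thesis by (simp add: sum_distrib_left)
  qed
  then show ?thesis
    by (intro good_le[OF good_cmult[OF Ls0 b_good]] Eall_nonneg)
qed

lemma yerr_good: "good (\<lambda>t. norm (y t i $ l - (1 / real CARD('n)) *\<^sub>R (\<Sum>j\<in>UNIV. gf j (x t j) $ l)))"
proof -
  obtain K \<rho> where K: "0 \<le> K" "0 < \<rho>" "\<rho> < 1" and b: "\<And>t i.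
   norm (y t i $ l - (1 / real CARD('n)) *\<^sub>R (\<Sum>j\<in>UNIV. gf j (x t j) $ l)) \<le> K * (\<rho> ^ t + conv \<rho> Eall t)"
    using y_block[of l] by blast
  have "good (\<lambda>t. K * (\<rho> ^ t + conv \<rho> Eall t))"
    using K by (intro good_cmult good_add good_geom good_conv Eall_good) auto
  then show ?thesis by (rule good_le) (auto intro: b)
qed

lemma final_good: "good (\<lambda>t. norm (y t i - (1 / real CARD('n)) *\<^sub>R (\<Sum>j\<in>UNIV. gf j (x t j))))"
proof -
  have g: "good (\<lambda>t. \<Sum>l\<in>UNIV. norm (y t i $ l - (1 / real CARD('n)) *\<^sub>R (\<Sum>j\<in>UNIV. gf j (x t j) $ l)))"
    by (rule good_sum) (auto intro: yerr_good)
  show ?thesis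
  proof (rule good_le[OF g])
    show "0 \<le> norm (y t i - (1 / real CARD('n)) *\<^sub>R (\<Sum>j\<in>UNIV. gf j (x t j)))" for t by simp
    show "norm (y t i - (1 / real CARD('n)) *\<^sub>R (\<Sum>j\<in>UNIV. gf j (x t j)))
       \<le> (\<Sum>l\<in>UNIV. norm (y t i $ l - (1 / real CARD('n)) *\<^sub>R (\<Sum>j\<in>UNIV. gf j (x t j) $ l)))" for t
      using norm_le_comp[of "y t i - (1 / real CARD('n)) *\<^sub>R (\<Sum>j\<in>UNIV. gf j (x t j))"] by simp
  qed
qed

lemma final:
  "(\<lambda>t. norm (y t i - (1 / real CARD('n)) *\<^sub>R (\<Sum>j\<in>UNIV. gf j (x t j)))) \<longlonglongrightarrow> 0
   \<and> summable (\<lambda>t. \<gamma> t * norm (y t i - (1 / real CARD('n)) *\<^sub>R (\<Sum>j\<in>UNIV. gf j (x t j))))"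
  using final_good[of i] unfolding good_def by blast

end


theorem mainTheorem6:
  fixes f :: "'n::finite \<Rightarrow> real^'d::finite^'b::finite \<Rightarrow> real"
    and gf :: "'n \<Rightarrow> real^'d^'b \<Rightarrow> real^'d^'b"
    and r :: "'b \<Rightarrow> real^'d \<Rightarrow> real"
    and Kb :: "'b \<Rightarrow> (real^'d) set"
    and E :: "('n \<times> 'n) set"
    and sel :: "nat \<Rightarrow> 'n \<Rightarrow> 'b"
    and A :: "nat \<Rightarrow> 'b \<Rightarrow> 'n \<Rightarrow> 'n \<Rightarrow> real"
    and \<kappa> :: real
    and ft :: "'n \<Rightarrow> 'b \<Rightarrow> real^'d \<Rightarrow> real^'d^'b \<Rightarrow> real"
    and gft :: "'n \<Rightarrow> 'b \<Rightarrow> real^'d \<Rightarrow> real^'d^'b \<Rightarrow> real^'d"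
    and \<tau> :: "'n \<Rightarrow> real"
    and \<gamma> :: "nat \<Rightarrow> real"
    and x y :: "nat \<Rightarrow> 'n \<Rightarrow> real^'d^'b"
    and \<phi> :: "nat \<Rightarrow> 'n \<Rightarrow> 'b \<Rightarrow> real"
    and xt :: "nat \<Rightarrow> 'n \<Rightarrow> real^'d"
  \<comment> \<open>constraint sets\<close>
  assumes K_ne: "\<And>l. Kb l \<noteq> {}"
    and K_closed: "\<And>l. closed (Kb l)"
    and K_convex: "\<And>l. convex (Kb l)"
  \<comment> \<open>smooth parts f_i\<close>
    and f_C1: "\<And>i. \<exists>S. open S \<and> prodset Kb \<subseteq> S \<and>
                 (\<forall>u\<in>S. (f i has_derivative (\<lambda>h. gf i u \<bullet> h)) (at u)) \<and> continuous_on S (gf i)"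
    and gf_lip: "\<And>i. \<exists>L. \<forall>u\<in>prodset Kb. \<forall>v\<in>prodset Kb. norm (gf i u - gf i v) \<le> L * norm (u - v)"
    and gf_bdd: "\<And>i. \<exists>M. \<forall>u\<in>prodset Kb. norm (gf i u) \<le> M"
  \<comment> \<open>nonsmooth parts r_l\<close>
    and r_convex: "\<And>l. convex_on UNIV (r l)"
    and r_subgrad_bdd: "\<And>l. \<exists>M. \<forall>u\<in>Kb l. \<forall>g. is_subgradient (r l) u g \<longrightarrow> norm g \<le> M"
  \<comment> \<open>coercivity of U\<close>
    and U_coercive: "coercive_on (prodset Kb) (\<lambda>u. (\<Sum>i\<in>UNIV. f i u) + (\<Sum>l\<in>UNIV. r l (u $ l)))"
  \<comment> \<open>network: strongly connected digraph with all self-loops; (j,i) \<in> E means j is an in-neighbour of i\<close>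
    and E_loops: "\<And>i. (i, i) \<in> E"
    and E_sc: "\<And>i j. (i, j) \<in> E\<^sup>*"
  \<comment> \<open>block selection\<close>
    and sel_ess_cyclic: "\<And>i. \<exists>T>0. \<forall>t. (\<lambda>s. sel (t + s) i) ` {..<T} = UNIV"
  \<comment> \<open>weights\<close>
    and \<kappa>_pos: "\<kappa> > 0"
    and A_pos: "\<And>t l i j. (j, i) \<in> edges_blk E sel t l \<Longrightarrow> A t l i j > \<kappa>"
    and A_zero: "\<And>t l i j. (j, i) \<notin> edges_blk E sel t l \<Longrightarrow> A t l i j = 0"
    and A_colstoch: "\<And>t l j. (\<Sum>i\<in>UNIV. A t l i j) = 1"
  \<comment> \<open>surrogates\<close>
    and \<tau>_pos: "\<And>i. \<tau> i > 0"
    and ft_deriv: "\<And>i l u z. u \<in> prodset Kb \<Longrightarrow> z \<in> Kb l \<Longrightarrow>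
                 ((\<lambda>w. ft i l w u) has_derivative (\<lambda>h. gft i l z u \<bullet> h)) (at z)"
    and ft_C1: "\<And>i l u. u \<in> prodset Kb \<Longrightarrow> continuous_on (Kb l) (\<lambda>z. gft i l z u)"
    and ft_sconvex: "\<And>i l u. u \<in> prodset Kb \<Longrightarrow> strongly_convex_on (Kb l) (\<lambda>z. ft i l z u) (\<tau> i)"
    and ft_grad_consistent: "\<And>i l u. u \<in> prodset Kb \<Longrightarrow> gft i l (u $ l) u = gf i u $ l"
    and ft_grad_lip: "\<And>i l. \<exists>L. \<forall>z\<in>Kb l. \<forall>u\<in>prodset Kb. \<forall>v\<in>prodset Kb.
                 norm (gft i l z u - gft i l z v) \<le> L * norm (u - v)"
  \<comment> \<open>step sizes\<close>
    and \<gamma>_pos: "\<And>t. 0 < \<gamma> t" and \<gamma>_le1: "\<And>t. \<gamma> t \<le> 1"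
    and \<gamma>_mono: "\<And>t. \<gamma> (Suc t) \<le> \<gamma> t"
    and \<gamma>_not_summable: "\<not> summable \<gamma>"
    and \<gamma>_sq_summable: "summable (\<lambda>t. (\<gamma> t)\<^sup>2)"
  \<comment> \<open>initialization\<close>
    and x0: "\<And>i. x 0 i \<in> prodset Kb"
    and y0: "\<And>i. y 0 i = gf i (x 0 i)"
    and \<phi>0: "\<And>i l. \<phi> 0 i l = 1"
  \<comment> \<open>local optimization step: xt t i is the minimizer over K_{l_i^t}\<close>
    and xt_in: "\<And>t i. xt t i \<in> Kb (sel t i)"
    and xt_min: "\<And>t i z. z \<in> Kb (sel t i) \<Longrightarrow>
        ft i (sel t i) (xt t i) (x t i)
          + (of_nat CARD('n) *\<^sub>R (y t i $ sel t i) - gf i (x t i) $ sel t i) \<bullet> (xt t i - x t i $ sel t i)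
          + r (sel t i) (xt t i)
        \<le> ft i (sel t i) z (x t i)
          + (of_nat CARD('n) *\<^sub>R (y t i $ sel t i) - gf i (x t i) $ sel t i) \<bullet> (z - x t i $ sel t i)
          + r (sel t i) z"
  \<comment> \<open>consensus / tracking updates\<close>
    and \<phi>_upd: "\<And>t i l. \<phi> (Suc t) i l = (\<Sum>j\<in>nbrs E sel t i l. A t l i j * \<phi> t j l)"
    and x_upd: "\<And>t i l. x (Suc t) i $ l =
        (\<Sum>j\<in>nbrs E sel t i l. (A t l i j * \<phi> t j l / \<phi> (Suc t) i l) *\<^sub>R
            (x t j $ l + \<gamma> t *\<^sub>R (if l = sel t j then xt t j - x t j $ l else 0)))"
    and y_upd: "\<And>t i l. y (Suc t) i $ l =
        (\<Sum>j\<in>nbrs E sel t i l. (A t l i j / \<phi> (Suc t) i l) *\<^sub>R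
            (\<phi> t j l *\<^sub>R (y t j $ l) + gf j (x (Suc t) j) $ l - gf j (x t j) $ l))"
  shows "(\<lambda>t. norm (y t i - (1 / real CARD('n)) *\<^sub>R (\<Sum>j\<in>UNIV. gf j (x t j)))) \<longlonglongrightarrow> 0
       \<and> summable (\<lambda>t. \<gamma> t * norm (y t i - (1 / real CARD('n)) *\<^sub>R (\<Sum>j\<in>UNIV. gf j (x t j))))"
proof -
  interpret S: setting gf r Kb E sel A \<kappa> ft gft \<tau> \<gamma> x y \<phi> xt
    by (unfold_locales; rule assms)
  show ?thesis by (rule S.final)
qed

end
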